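(* For every $n\ge 1$ there is a bijection $\Phi:\mathfrak{S}_n\to\mathfrak{S}_n$ such that for all $\sigma\in\mathfrak{S}_n$, $$(\operatorname{ndes}\sigma,\ \operatorname{fmax}\sigma,\ (31\text{-}2)\sigma,\ (2\text{-}31)\sigma,\ \operatorname{MAD}\sigma) = (\operatorname{wex}\tau,\ \operatorname{fix}\tau,\ \operatorname{cros}\tau,\ \operatorname{nest}\tau,\ \operatorname{inv}\tau),\quad \tau=\Phi(\sigma).$$
   Context: $\mathfrak{S}_n$ is the set of permutations $\sigma=\sigma_1\cdots\sigma_n$ of $[n]$. An index $i\in[n-1]$ with $\sigma_i>\sigma_{i+1}$ makes $\sigma_i$ a descent (top); $\operatorname{des}\sigma$ is the number of such $i$, and $\operatorname{ndes}\sigma=n-\operatorname{des}\sigma$ is the number of nondescents, i.e. entries $\sigma_i$ ($i\in[n]$, including $\sigma_n$) that are not descent tops. $\sigma_i$ is a left-to-right maximum if $\sigma_i=\max\{\sigma_1,\dots,\sigma_i\}$; $\operatorname{fmax}\sigma$ is the number of nondescents $\sigma_i$ that are left-to-right maxima. $(31\text{-}2)\sigma=\#\{(i,j): i+1<j,\ \sigma_i>\sigma_j>\sigma_{i+1}\}$; $(2\text{-}31)\sigma=\#\{(i,j): j<i-1,\ \sigma_{i-1}>\sigma_j>\sigma_i\}$; $\operatorname{MAD}\sigma=\operatorname{des}\sigma+(31\text{-}2)\sigma+2(2\text{-}31)\sigma$. Also $\operatorname{wex}\tau=\#\{i:\tau_i\ge i\}$, $\operatorname{fix}\tau=\#\{i:\tau_i=i\}$,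 $\operatorname{cros}\tau=\#\{(i,j): i<j\le\tau_i<\tau_j \text{ or } \tau_i<\tau_j<i<j\}$, $\operatorname{nest}\tau=\#\{(i,j): i<j\le\tau_j<\tau_i \text{ or } \tau_j<\tau_i<i<j\}$, $\operatorname{inv}\tau=\#\{(i,j):i<j,\ \tau_i>\tau_j\}$. *)

theory Defs
  imports "HOL-Combinatorics.Permutations"
begin

definition perms :: "nat \<Rightarrow> (nat \<Rightarrow> nat) set" where
  "perms n = {s. s permutes {1..n}}"

definition des :: "nat \<Rightarrow> (nat \<Rightarrow> nat) \<Rightarrow> nat" where
  "des n s = card {i \<in> {1..<n}. s i > s (Suc i)}"

definition ndes :: "nat \<Rightarrow> (nat \<Rightarrow> nat) \<Rightarrow> nat" where
  "ndes n s = n - des n s"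

definition fmax :: "nat \<Rightarrow> (nat \<Rightarrow> nat) \<Rightarrow> nat" where
  "fmax n s = card {i \<in> {1..n}. \<not> (i < n \<and> s i > s (Suc i))
                                \<and> (\<forall>j \<in> {1..i}. s j \<le> s i)}"

definition pat31_2 :: "nat \<Rightarrow> (nat \<Rightarrow> nat) \<Rightarrow> nat" where
  "pat31_2 n s = card {(i, j). i \<in> {1..n} \<and> j \<in> {1..n} \<and> i + 1 < j
                          \<and> s i > s j \<and> s j > s (i + 1)}"

definition pat2_31 :: "nat \<Rightarrow> (nat \<Rightarrow> nat) \<Rightarrow> nat" where
  "pat2_31 n s = card {(i, j). i \<in> {1..n} \<and> j \<in> {1..n} \<and> j + 1 < i
                          \<and> s (i - 1) > s j \<and> s j > s i}"

definition MAD :: "nat \<Rightarrow> (nat \<Rightarrow> nat) \<Rightarrow> nat" where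
  "MAD n s = des n s + pat31_2 n s + 2 * pat2_31 n s"

definition wex :: "nat \<Rightarrow> (nat \<Rightarrow> nat) \<Rightarrow> nat" where
  "wex n t = card {i \<in> {1..n}. t i \<ge> i}"

definition fixcount :: "nat \<Rightarrow> (nat \<Rightarrow> nat) \<Rightarrow> nat" where
  "fixcount n t = card {i \<in> {1..n}. t i = i}"

definition cros :: "nat \<Rightarrow> (nat \<Rightarrow> nat) \<Rightarrow> nat" where
  "cros n t = card {(i, j). i \<in> {1..n} \<and> j \<in> {1..n} \<and>
      ((i < j \<and> j \<le> t i \<and> t i < t j) \<or> (t i < t j \<and> t j < i \<and> i < j))}"

definition nest :: "nat \<Rightarrow> (nat \<Rightarrow> nat) \<Rightarrow> nat" where
  "nest n t = card {(i, j). i \<in> {1..n} \<and> j \<in> {1..n} \<and>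
      ((i < j \<and> j \<le> t j \<and> t j < t i) \<or> (t j < t i \<and> t i < i \<and> i < j))}"

definition invc :: "nat \<Rightarrow> (nat \<Rightarrow> nat) \<Rightarrow> nat" where
  "invc n t = card {(i, j). i \<in> {1..n} \<and> j \<in> {1..n} \<and> i < j \<and> t i > t j}"

end

theory Submission
  imports Defs
begin

definition hstep :: "nat \<Rightarrow> nat \<Rightarrow> nat \<Rightarrow> nat option" where
 "hstep ty g h = (if ty = 0 \<and> g < h then Some (h - 1)
   else if ty = 1 \<and> g < h then Some h
   else if ty = 2 \<and> g \<le> h then Some h
   else if ty = 3 \<and> g \<le> h then Some (Suc h) else None)"

fun runh :: "nat \<Rightarrow> (nat \<times> nat) list \<Rightarrow> nat option" where
  "runh h [] = Some h"
| "runh h (s # l) = (case hstep (fst s) (snd s) h of None \<Rightarrow> None | Some h' \<Rightarrow> runh h' l)"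

lemma runh_snoc: "runh h (l @ [s]) = (case runh h l of None \<Rightarrow> None | Some h' \<Rightarrow> hstep (fst s) (snd s) h')"
  by (induction l arbitrary: h) (auto split: option.splits)

definition HS :: "nat \<Rightarrow> nat \<Rightarrow> (nat \<times> nat) list set" where
  "HS k h = {l. length l = k \<and> runh 0 l = Some h}"

lemma runh_bound: "runh h0 l = Some h \<Longrightarrow> \<forall>s\<in>set l. fst s \<le> 3 \<and> snd s \<le> h0 + length l"
proof (induction l arbitrary: h0)
  case Nil then show ?case by simp
next
  case (Cons s l)
  then obtain h' where h': "hstep (fst s) (snd s) h0 = Some h'" "runh h' l = Some h"
    by (auto split: option.splits)
  from h'(1) have "fst s \<le> 3 \<and> snd s \<le> h0 \<and> h' \<le> Suc h0"
    by (auto simp: hstep_def split: if_splits)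
  with Cons.IH[OF h'(2)] show ?case by force
qed

lemma HS_finite: "finite (HS k h)"
proof -
  have "HS k h \<subseteq> {l. set l \<subseteq> {..3} \<times> {..k} \<and> length l = k}"
    using runh_bound unfolding HS_def by fastforce
  moreover have "finite {l. set l \<subseteq> {..3::nat} \<times> {..k::nat} \<and> length l = k}"
    by (rule finite_lists_length_eq) auto
  ultimately show ?thesis by (rule finite_subset)
qed

definition appg :: "nat \<Rightarrow> (nat \<times> nat) list \<times> nat \<Rightarrow> (nat \<times> nat) list" where
  "appg ty p = fst p @ [(ty, snd p)]"

lemma card_appg: "card (appg ty ` (HS k h' \<times> {..<m})) = card (HS k h') * m"
proof -
  have "inj_on (appg ty) (HS k h' \<times> {..<m})"
    by (auto simp: inj_on_def appg_def)
  then show ?thesis by (simp add: card_image card_cartesian_product)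
qed

lemma HS_Suc_sub: "HS (Suc k) h \<subseteq>
   appg 0 ` (HS k (Suc h) \<times> {..<Suc h}) \<union> appg 1 ` (HS k h \<times> {..<h})
   \<union> appg 2 ` (HS k h \<times> {..<Suc h}) \<union> (if h = 0 then {} else appg 3 ` (HS k (h - 1) \<times> {..<h}))"
proof
  fix l assume "l \<in> HS (Suc k) h"
  then have len: "length l = Suc k" and r: "runh 0 l = Some h" by (auto simp: HS_def)
  obtain l' s where ls: "l = l' @ [s]" using len by (metis length_Suc_conv_rev)
  obtain ty g where s: "s = (ty, g)" by fastforce
  from r ls obtain h' where h': "runh 0 l' = Some h'" "hstep ty g h' = Some h"
    by (auto simp: runh_snoc s split: option.splits)
  have l'in: "l' \<in> HS k h'" using h' len ls by (auto simp: HS_def)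
  have lapp: "l = appg ty (l', g)" using ls s by (simp add: appg_def)
  consider "ty = 0" "g < h'" "h = h' - 1" | "ty = 1" "g < h" "h' = h" | "ty = 2" "g \<le> h" "h' = h"
    | "ty = 3" "g \<le> h'" "h = Suc h'"
    using h'(2) unfolding hstep_def by (auto split: if_splits)
  then show "l \<in> appg 0 ` (HS k (Suc h) \<times> {..<Suc h}) \<union> appg 1 ` (HS k h \<times> {..<h})
   \<union> appg 2 ` (HS k h \<times> {..<Suc h}) \<union> (if h = 0 then {} else appg 3 ` (HS k (h - 1) \<times> {..<h}))"
  proof cases
    case 1
    then have "h' = Suc h" by simp
    then show ?thesis using 1 l'in lapp by auto
  next
    case 2 then show ?thesis using l'in lapp by auto
  next
    case 3 then show ?thesis using l'in lapp by auto
  next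
    case 4 then show ?thesis using l'in lapp by auto
  qed
qed

lemma HS_Suc_sup: "appg 0 ` (HS k (Suc h) \<times> {..<Suc h}) \<union> appg 1 ` (HS k h \<times> {..<h})
   \<union> appg 2 ` (HS k h \<times> {..<Suc h}) \<union> (if h = 0 then {} else appg 3 ` (HS k (h - 1) \<times> {..<h}))
   \<subseteq> HS (Suc k) h"
proof -
  have "appg ty (l, g) \<in> HS (Suc k) h" if "l \<in> HS k h'" "hstep ty g h' = Some h" for ty l g h'
    using that by (simp add: HS_def appg_def runh_snoc)
  note X = this
  have "appg 0 ` (HS k (Suc h) \<times> {..<Suc h}) \<subseteq> HS (Suc k) h"
    using X[of _ _ 0] by (auto simp: hstep_def)
  moreover have "appg 1 ` (HS k h \<times> {..<h}) \<subseteq> HS (Suc k) h"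
    using X[of _ _ 1] by (auto simp: hstep_def)
  moreover have "appg 2 ` (HS k h \<times> {..<Suc h}) \<subseteq> HS (Suc k) h"
    using X[of _ _ 2] by (auto simp: hstep_def)
  moreover have "(if h = 0 then {} else appg 3 ` (HS k (h - 1) \<times> {..<h})) \<subseteq> HS (Suc k) h"
    using X[of _ _ 3] by (auto simp: hstep_def)
  ultimately show ?thesis by blast
qed

lemma HS_Suc: "HS (Suc k) h =
   appg 0 ` (HS k (Suc h) \<times> {..<Suc h}) \<union> appg 1 ` (HS k h \<times> {..<h})
   \<union> appg 2 ` (HS k h \<times> {..<Suc h}) \<union> (if h = 0 then {} else appg 3 ` (HS k (h - 1) \<times> {..<h}))"
  using HS_Suc_sub HS_Suc_sup by (rule subset_antisym)

lemma binom_id: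
  "Suc k * (Suc k choose h) = Suc h * (k choose Suc h) + (2*h+1) * (k choose h)
      + (if h = 0 then 0 else h * (k choose (h - 1)))"
proof (cases h)
  case 0 then show ?thesis by simp
next
  case (Suc h1)
  have a: "Suc h * (k choose Suc h) = (k - h) * (k choose h)"
    using binomial_absorption[of h k] binomial_absorb_comp[of k h] by simp
  have b: "h * (k choose h) = (k - h1) * (k choose h1)"
    using binomial_absorption[of h1 k] binomial_absorb_comp[of k h1] Suc by simp
  have c: "(Suc k choose h) = (k choose h) + (k choose h1)" using Suc by simp
  show ?thesis
  proof (cases "h \<le> k")
    case True
    then obtain m where m: "k = h + m" using le_Suc_ex by blast
    have b2: "h * (k choose h) = Suc m * (k choose h1)" using b m Suc by simp
    have a2: "Suc h * (k choose Suc h) = m * (k choose h)" using a m by simp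
    define X where "X = k choose h"
    define Y where "Y = k choose h1"
    define Z where "Z = k choose Suc h"
    have "Suc k * (Suc k choose h) = Suc (h + m) * (X + Y)" using c m X_def Y_def by simp
    also have "\<dots> = m * X + (2*h+1) * X + h * Y" using b2 unfolding X_def[symmetric] Y_def[symmetric]
      by (simp add: algebra_simps)
    finally show ?thesis using a2 Suc unfolding X_def Y_def Z_def by simp
  next
    case False
    then have "k choose h = 0" "k choose Suc h = 0" by auto
    moreover have "h1 = k \<or> h1 > k" using False Suc by auto
    ultimately show ?thesis using c Suc by (auto simp: binomial_eq_0)
  qed
qed

lemma card_HS: "card (HS k h) = fact k * (k choose h)"
proof (induction k arbitrary: h)
  case 0
  have "HS 0 h = (if h = 0 then {[]} else {})" by (auto simp: HS_def)
  then show ?case by simp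
next
  case (Suc k)
  have fin: "\<And>ty h' m. finite (appg ty ` (HS k h' \<times> {..<m}))"
    using HS_finite by auto
  have disj: "\<And>t1 t2 A B C D. t1 \<noteq> t2 \<Longrightarrow> appg t1 ` (A \<times> B) \<inter> appg t2 ` (C \<times> D) = {}"
    by (auto simp: appg_def)
  define A0 where "A0 = appg 0 ` (HS k (Suc h) \<times> {..<Suc h})"
  define A1 where "A1 = appg 1 ` (HS k h \<times> {..<h})"
  define A2 where "A2 = appg 2 ` (HS k h \<times> {..<Suc h})"
  define A3 where "A3 = (if h = 0 then {} else appg 3 ` (HS k (h - 1) \<times> {..<h}))"
  have f: "finite A0" "finite A1" "finite A2" "finite A3" unfolding A0_def A1_def A2_def A3_def
    using fin by auto
  have d: "A0 \<inter> A1 = {}" "(A0 \<union> A1) \<inter> A2 = {}" "(A0 \<union> A1 \<union> A2) \<inter> A3 = {}"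
    unfolding A0_def A1_def A2_def A3_def by (auto simp: appg_def)
  have c3: "card A3 = (if h = 0 then 0 else card (HS k (h - 1)) * h)"
    unfolding A3_def by (simp add: card_appg)
  have "card (HS (Suc k) h) = card A0 + card A1 + card A2 + card A3"
    unfolding HS_Suc A0_def[symmetric] A1_def[symmetric] A2_def[symmetric] A3_def[symmetric]
    using f d by (simp add: card_Un_disjoint)
  also have "\<dots> = card (HS k (Suc h)) * Suc h + card (HS k h) * h + card (HS k h) * Suc h
     + (if h = 0 then 0 else card (HS k (h - 1)) * h)"
    unfolding A0_def A1_def A2_def c3 by (simp add: card_appg)
  also have "\<dots> = fact k * (Suc h * (k choose Suc h) + (2*h+1) * (k choose h)
      + (if h = 0 then 0 else h * (k choose (h - 1))))"
    using Suc.IH by (simp add: algebra_simps)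
  also have "\<dots> = fact k * (Suc k * (Suc k choose h))" by (simp only: binom_id)
  also have "\<dots> = fact (Suc k) * (Suc k choose h)" by (simp add: algebra_simps)
  finally show ?case .
qed



lemma card_fibers:
  assumes "finite S" "f ` S \<subseteq> A" "finite A"
  shows "card S = (\<Sum>x\<in>A. card {y\<in>S. f y = x})"
proof -
  have "S = (\<Union>x\<in>A. {y\<in>S. f y = x})" using assms(2) by auto
  then have "card S = card (\<Union>x\<in>A. {y\<in>S. f y = x})" by simp
  also have "\<dots> = (\<Sum>x\<in>A. card {y\<in>S. f y = x})"
    by (rule card_UN_disjoint) (use assms in auto)
  finally show ?thesis .
qed

definition sdesc :: "(nat \<Rightarrow> nat) \<Rightarrow> nat \<Rightarrow> bool" where
  "sdesc s x = (s (Suc (inv s x)) < x)"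
definition sleft :: "(nat \<Rightarrow> nat) \<Rightarrow> nat \<Rightarrow> bool" where
  "sleft s x = (s (inv s x - 1) > x)"
definition sty :: "(nat \<Rightarrow> nat) \<Rightarrow> nat \<Rightarrow> nat" where
  "sty s x = (if sdesc s x then (if sleft s x then 1 else 0) else (if sleft s x then 3 else 2))"
definition sL :: "nat \<Rightarrow> (nat \<Rightarrow> nat) \<Rightarrow> nat \<Rightarrow> nat" where
  "sL n s x = card {i \<in> {1..n}. i + 1 < inv s x \<and> s i > x \<and> x > s (i + 1)}"
definition sR :: "nat \<Rightarrow> (nat \<Rightarrow> nat) \<Rightarrow> nat \<Rightarrow> nat" where
  "sR n s x = card {i \<in> {1..n}. inv s x + 1 < i \<and> s (i - 1) > x \<and> x > s i}"
definition sDN :: "nat \<Rightarrow> (nat \<Rightarrow> nat) \<Rightarrow> nat \<Rightarrow> nat set" where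
  "sDN n s x = {k \<in> {1..n}. s (k - 1) \<ge> x \<and> x > s k}"
lemma card_swap1:
  assumes "finite A" "finite B" "A - {a} = B - {b}"
  shows "card A + (if b \<in> B then 1 else 0) = card B + (if a \<in> A then 1 else 0)"
proof -
  have ca: "card A = card (A - {a}) + (if a \<in> A then 1 else 0)"
  proof (cases "a \<in> A")
    case True then show ?thesis using assms(1) card.remove by fastforce
  next
    case False then show ?thesis by simp
  qed
  have cb: "card B = card (B - {b}) + (if b \<in> B then 1 else 0)"
  proof (cases "b \<in> B")
    case True then show ?thesis using assms(2) card.remove by fastforce
  next
    case False then show ?thesis by simp
  qed
  show ?thesis using ca cb assms(3) by simp
qed

definition sGS :: "nat \<Rightarrow> (nat \<Rightarrow> nat) \<Rightarrow> nat \<Rightarrow> nat \<Rightarrow> nat set" where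
  "sGS n s z t = {k \<in> {1..n}. k \<le> inv s z \<and> s (k - 1) > t \<and> s k \<le> t}"

lemma card_filter_sum: "finite A \<Longrightarrow> card {x\<in>A. P x} = (\<Sum>x\<in>A. if P x then 1 else 0)"
  using sum.inter_filter[of A "\<lambda>_. 1::nat" P] by simp

definition hD :: "(nat \<times> nat) list \<Rightarrow> nat" where
  "hD l = (\<Sum>i<length l. if fst (l!i) < 2 then 1 else 0)"
definition hF :: "(nat \<times> nat) list \<Rightarrow> nat" where
  "hF l = (\<Sum>i<length l. if fst (l!i) = 2 \<and> snd (l!i) = 0 then 1 else 0)"
definition hG :: "(nat \<times> nat) list \<Rightarrow> nat" where
  "hG l = (\<Sum>i<length l. snd (l!i))"
definition hQ :: "(nat \<times> nat) list \<Rightarrow> nat" where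
  "hQ l = (\<Sum>i<length l. the (runh 0 (take i l)) - snd (l!i) - (if fst (l!i) < 2 then 1 else 0))"
definition HT :: "(nat \<times> nat) list \<Rightarrow> nat \<times> nat \<times> nat \<times> nat \<times> nat" where
  "HT l = (length l - hD l, hF l, hG l, hQ l, hD l + hG l + 2 * hQ l)"

context
  fixes n :: nat and s :: "nat \<Rightarrow> nat"
  assumes sp: "s permutes {1..n}"
begin

lemma s0: "s 0 = 0" using sp by (simp add: permutes_not_in)
lemma sn1: "i > n \<Longrightarrow> s i = i" using sp by (simp add: permutes_not_in)
lemma s_in: "i \<in> {1..n} \<Longrightarrow> s i \<in> {1..n}" using permutes_in_image[OF sp] by blast
lemma si_inv: "s (inv s x) = x" using sp by (simp add: permutes_inverses)
lemma inv_si: "inv s (s i) = i" using sp by (simp add: permutes_inverses)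
lemma inv_in: "x \<in> {1..n} \<Longrightarrow> inv s x \<in> {1..n}"
  using permutes_in_image[OF permutes_inv[OF sp]] by blast
lemma s_inj: "s i = s j \<longleftrightarrow> i = j" using sp by (metis inv_si)
lemma s_le: "s i \<le> n \<or> i > n" using sp s_in s0 by (cases "i \<le> n"; cases "i = 0") auto

lemma sN_split:
  assumes x: "x \<in> {1..n}"
  shows "card (sDN n s x) = sL n s x + (if sdesc s x then 1 else 0) + sR n s x"
proof -
  let ?p = "inv s x"
  have p: "?p \<in> {1..n}" "s ?p = x" using inv_in[OF x] si_inv by auto
  define K1 where "K1 = {k \<in> sDN n s x. k < ?p}"
  define K2 where "K2 = {k \<in> sDN n s x. k = ?p + 1}"
  define K3 where "K3 = {k \<in> sDN n s x. k > ?p + 1}"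
  have fin: "finite K1" "finite K2" "finite K3" unfolding K1_def K2_def K3_def sDN_def by auto
  have "sDN n s x = K1 \<union> K2 \<union> K3"
  proof -
    have "?p \<notin> sDN n s x" using p by (simp add: sDN_def)
    then have "\<And>k. k \<in> sDN n s x \<Longrightarrow> k < ?p \<or> k = ?p + 1 \<or> k > ?p + 1"
      by (metis linorder_neqE_nat Suc_eq_plus1 Suc_lessI)
    then show ?thesis unfolding K1_def K2_def K3_def by blast
  qed
  moreover have "K1 \<inter> K2 = {}" "(K1 \<union> K2) \<inter> K3 = {}" unfolding K1_def K2_def K3_def by auto
  ultimately have c: "card (sDN n s x) = card K1 + card K2 + card K3"
    using fin by (simp add: card_Un_disjoint)
  have "K1 = Suc ` {i \<in> {1..n}. i + 1 < ?p \<and> s i > x \<and> x > s (i + 1)}"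
  proof (rule set_eqI, rule iffI)
    fix k assume k: "k \<in> K1"
    then have k1: "k \<in> {1..n}" "s (k - 1) \<ge> x" "x > s k" "k < ?p" by (auto simp: K1_def sDN_def)
    have "k \<noteq> 1" using k1 s0 x by auto
    then have "k - 1 \<in> {1..n}" using k1 by auto
    moreover have "s (k - 1) \<noteq> x"
    proof -
      have "k - 1 \<noteq> ?p" using k1 by linarith
      then show ?thesis using p(2) s_inj by metis
    qed
    ultimately show "k \<in> Suc ` {i \<in> {1..n}. i + 1 < ?p \<and> s i > x \<and> x > s (i + 1)}"
      using k1 \<open>k \<noteq> 1\<close> by (auto simp: image_iff intro!: bexI[of _ "k - 1"])
  next
    fix k assume "k \<in> Suc ` {i \<in> {1..n}. i + 1 < ?p \<and> s i > x \<and> x > s (i + 1)}"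
    then obtain i where i: "k = Suc i" "i \<in> {1..n}" "i + 1 < ?p" "s i > x" "x > s (i + 1)" by auto
    then show "k \<in> K1" using p by (auto simp: K1_def sDN_def)
  qed
  then have c1: "card K1 = sL n s x" by (simp add: sL_def card_image)
  have c3: "K3 = {i \<in> {1..n}. ?p + 1 < i \<and> s (i - 1) > x \<and> x > s i}"
  proof -
    have "s (i - 1) \<noteq> x" if "?p + 1 < i" for i
    proof -
      have "i - 1 \<noteq> ?p" using that by linarith
      then show ?thesis using p(2) s_inj by metis
    qed
    then show ?thesis unfolding K3_def sDN_def by force
  qed
  have c2: "card K2 = (if sdesc s x then 1 else 0)"
  proof (cases "sdesc s x")
    case True
    then have "s (?p + 1) < x" by (simp add: sdesc_def)
    moreover then have "?p + 1 \<le> n" using sn1[of "?p + 1"] x by (cases "?p + 1 \<le> n") auto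
    ultimately have "K2 = {?p + 1}" using p by (auto simp: K2_def sDN_def)
    then show ?thesis using True by simp
  next
    case False
    then have "K2 = {}" by (auto simp: K2_def sDN_def sdesc_def)
    then show ?thesis using False by simp
  qed
  show ?thesis using c c1 c2 c3 by (simp add: sR_def)
qed


lemma sN_step:
  assumes x: "x \<in> {1..n}"
  shows "card (sDN n s (Suc x)) + (if sdesc s x then 1 else 0) = card (sDN n s x) + (if sleft s x then 1 else 0)"
proof -
  let ?p = "inv s x"
  have p: "?p \<in> {1..n}" "s ?p = x" using inv_in[OF x] si_inv by auto
  have eq: "sDN n s (Suc x) - {?p} = sDN n s x - {?p + 1}"
  proof (rule set_eqI, rule iffI)
    fix k assume k: "k \<in> sDN n s (Suc x) - {?p}"
    then have "k \<noteq> ?p" by simp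
    then have "s k \<noteq> x" using p(2) s_inj by metis
    moreover have "s (k - 1) \<noteq> x" using k by (auto simp: sDN_def)
    ultimately show "k \<in> sDN n s x - {?p + 1}" using k p(2) by (auto simp: sDN_def)
  next
    fix k assume k: "k \<in> sDN n s x - {?p + 1}"
    then have k1: "k \<ge> 1" by (auto simp: sDN_def)
    have "k - 1 \<noteq> ?p" using k k1 by auto
    then have "s (k - 1) \<noteq> x" using p(2) s_inj by metis
    moreover have "k \<noteq> ?p" using k p by (auto simp: sDN_def)
    ultimately show "k \<in> sDN n s (Suc x) - {?p}" using k by (auto simp: sDN_def)
  qed
  have a: "(?p \<in> sDN n s (Suc x)) = sleft s x"
    using p by (auto simp: sDN_def sleft_def)
  have b: "(?p + 1 \<in> sDN n s x) = sdesc s x"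
  proof
    assume "?p + 1 \<in> sDN n s x" then show "sdesc s x" by (auto simp: sDN_def sdesc_def)
  next
    assume d: "sdesc s x"
    then have "s (?p + 1) < x" by (simp add: sdesc_def)
    moreover then have "?p + 1 \<le> n" using sn1[of "?p + 1"] x by (cases "?p + 1 \<le> n") auto
    ultimately show "?p + 1 \<in> sDN n s x" using p by (auto simp: sDN_def)
  qed
  have "card (sDN n s (Suc x)) + (if ?p + 1 \<in> sDN n s x then 1 else 0)
      = card (sDN n s x) + (if ?p \<in> sDN n s (Suc x) then 1 else 0)"
    by (rule card_swap1[OF _ _ eq]) (auto simp: sDN_def)
  then show ?thesis using a b by simp
qed

lemma sN_1: "sDN n s (Suc 0) = {}"
  using s_in by (fastforce simp: sDN_def)

lemma hstep_s:
  assumes x: "x \<in> {1..n}"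
  shows "hstep (sty s x) (sL n s x) (card (sDN n s x)) = Some (card (sDN n s (Suc x)))"
proof -
  have a: "card (sDN n s x) = sL n s x + (if sdesc s x then 1 else 0) + sR n s x" by (rule sN_split[OF x])
  have b: "card (sDN n s (Suc x)) + (if sdesc s x then 1 else 0) = card (sDN n s x) + (if sleft s x then 1 else 0)"
    by (rule sN_step[OF x])
  show ?thesis
  proof (cases "sdesc s x")
    case True
    show ?thesis
    proof (cases "sleft s x")
      case True then show ?thesis using a b \<open>sdesc s x\<close> by (simp add: hstep_def sty_def)
    next
      case False then show ?thesis using a b \<open>sdesc s x\<close> by (simp add: hstep_def sty_def)
    qed
  next
    case False
    show ?thesis
    proof (cases "sleft s x")
      case True then show ?thesis using a b \<open>\<not> sdesc s x\<close> by (simp add: hstep_def sty_def)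
    next
      case False then show ?thesis using a b \<open>\<not> sdesc s x\<close> by (simp add: hstep_def sty_def)
    qed
  qed
qed

definition shist :: "nat \<Rightarrow> (nat \<Rightarrow> nat) \<Rightarrow> (nat \<times> nat) list" where
  "shist m t = map (\<lambda>x. (sty t x, sL m t x)) [1..<Suc m]"

lemma runh_s: "x \<le> n \<Longrightarrow> runh 0 (map (\<lambda>x. (sty s x, sL n s x)) [1..<Suc x]) = Some (card (sDN n s (Suc x)))"
proof (induction x)
  case 0 then show ?case by (simp add: sN_1)
next
  case (Suc x)
  have "Suc x \<in> {1..n}" using Suc by auto
  then show ?case using Suc by (simp add: runh_snoc hstep_s)
qed


lemma shist_nth: "i < n \<Longrightarrow> shist n s ! i = (sty s (Suc i), sL n s (Suc i))"
  unfolding shist_def by (simp del: upt_Suc)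
lemma shist_len: "length (shist n s) = n" by (simp add: shist_def)
lemma shist_take: "i \<le> n \<Longrightarrow> runh 0 (take i (shist n s)) = Some (card (sDN n s (Suc i)))"
proof -
  assume i: "i \<le> n"
  have "take i (shist n s) = map (\<lambda>x. (sty s x, sL n s x)) [1..<Suc i]"
    using i unfolding shist_def by (simp del: upt_Suc add: take_map min_def)
  then show ?thesis using runh_s[OF i] by simp
qed

lemma fib31_2: "x \<in> {1..n} \<Longrightarrow>
  card {y \<in> {(i, j). i \<in> {1..n} \<and> j \<in> {1..n} \<and> i + 1 < j \<and> s i > s j \<and> s j > s (i + 1)}. (\<lambda>(i,j). s j) y = x}
  = sL n s x"
proof -
  assume x: "x \<in> {1..n}"
  let ?p = "inv s x"
  have p: "?p \<in> {1..n}" "s ?p = x" using inv_in[OF x] si_inv by auto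
  have "{y \<in> {(i, j). i \<in> {1..n} \<and> j \<in> {1..n} \<and> i + 1 < j \<and> s i > s j \<and> s j > s (i + 1)}. (\<lambda>(i,j). s j) y = x}
    = (\<lambda>i. (i, ?p)) ` {i \<in> {1..n}. i + 1 < ?p \<and> s i > x \<and> x > s (i + 1)}"
  proof (rule set_eqI, rule iffI)
    fix y assume y: "y \<in> {y \<in> {(i, j). i \<in> {1..n} \<and> j \<in> {1..n} \<and> i + 1 < j \<and> s i > s j \<and> s j > s (i + 1)}. (\<lambda>(i,j). s j) y = x}"
    obtain i j where ij: "y = (i, j)" by fastforce
    have "j = ?p" using y ij inv_si by auto
    then show "y \<in> (\<lambda>i. (i, ?p)) ` {i \<in> {1..n}. i + 1 < ?p \<and> s i > x \<and> x > s (i + 1)}"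
      using y ij by auto
  next
    fix y assume "y \<in> (\<lambda>i. (i, ?p)) ` {i \<in> {1..n}. i + 1 < ?p \<and> s i > x \<and> x > s (i + 1)}"
    then show "y \<in> {y \<in> {(i, j). i \<in> {1..n} \<and> j \<in> {1..n} \<and> i + 1 < j \<and> s i > s j \<and> s j > s (i + 1)}. (\<lambda>(i,j). s j) y = x}"
      using p by auto
  qed
  moreover have "inj (\<lambda>i::nat. (i, ?p))" by (auto simp: inj_on_def)
  ultimately show ?thesis unfolding sL_def by (simp add: card_image inj_on_subset)
qed

lemma fib2_31: "x \<in> {1..n} \<Longrightarrow>
  card {y \<in> {(i, j). i \<in> {1..n} \<and> j \<in> {1..n} \<and> j + 1 < i \<and> s (i - 1) > s j \<and> s j > s i}. (\<lambda>(i,j). s j) y = x}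
  = sR n s x"
proof -
  assume x: "x \<in> {1..n}"
  let ?p = "inv s x"
  have p: "?p \<in> {1..n}" "s ?p = x" using inv_in[OF x] si_inv by auto
  have "{y \<in> {(i, j). i \<in> {1..n} \<and> j \<in> {1..n} \<and> j + 1 < i \<and> s (i - 1) > s j \<and> s j > s i}. (\<lambda>(i,j). s j) y = x}
    = (\<lambda>i. (i, ?p)) ` {i \<in> {1..n}. ?p + 1 < i \<and> s (i - 1) > x \<and> x > s i}"
  proof (rule set_eqI, rule iffI)
    fix y assume y: "y \<in> {y \<in> {(i, j). i \<in> {1..n} \<and> j \<in> {1..n} \<and> j + 1 < i \<and> s (i - 1) > s j \<and> s j > s i}. (\<lambda>(i,j). s j) y = x}"
    obtain i j where ij: "y = (i, j)" by fastforce
    have "j = ?p" using y ij inv_si by auto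
    then show "y \<in> (\<lambda>i. (i, ?p)) ` {i \<in> {1..n}. ?p + 1 < i \<and> s (i - 1) > x \<and> x > s i}"
      using y ij by auto
  next
    fix y assume "y \<in> (\<lambda>i. (i, ?p)) ` {i \<in> {1..n}. ?p + 1 < i \<and> s (i - 1) > x \<and> x > s i}"
    then show "y \<in> {y \<in> {(i, j). i \<in> {1..n} \<and> j \<in> {1..n} \<and> j + 1 < i \<and> s (i - 1) > s j \<and> s j > s i}. (\<lambda>(i,j). s j) y = x}"
      using p by auto
  qed
  moreover have "inj (\<lambda>i::nat. (i, ?p))" by (auto simp: inj_on_def)
  ultimately show ?thesis unfolding sR_def by (simp add: card_image inj_on_subset)
qed

lemma pat31_2_sum: "pat31_2 n s = (\<Sum>x\<in>{1..n}. sL n s x)"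
proof -
  let ?S = "{(i, j). i \<in> {1..n} \<and> j \<in> {1..n} \<and> i + 1 < j \<and> s i > s j \<and> s j > s (i + 1)}"
  have "?S \<subseteq> {1..n} \<times> {1..n}" by blast
  then have fin: "finite ?S" by (rule finite_subset) simp
  have im: "(\<lambda>(i,j). s j) ` ?S \<subseteq> {1..n}"
  proof
    fix y assume "y \<in> (\<lambda>(i,j). s j) ` ?S"
    then obtain i j where ij: "(i, j) \<in> ?S" "y = s j" by auto
    then have "j \<in> {1..n}" by simp
    then show "y \<in> {1..n}" using ij(2) s_in by blast
  qed
  have "card ?S = (\<Sum>x\<in>{1..n}. card {y \<in> ?S. (\<lambda>(i,j). s j) y = x})"
    by (rule card_fibers[OF fin im]) simp
  also have "\<dots> = (\<Sum>x\<in>{1..n}. sL n s x)" by (rule sum.cong) (rule refl, rule fib31_2)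
  finally show ?thesis by (simp add: pat31_2_def)
qed

lemma pat2_31_sum: "pat2_31 n s = (\<Sum>x\<in>{1..n}. sR n s x)"
proof -
  let ?S = "{(i, j). i \<in> {1..n} \<and> j \<in> {1..n} \<and> j + 1 < i \<and> s (i - 1) > s j \<and> s j > s i}"
  have "?S \<subseteq> {1..n} \<times> {1..n}" by blast
  then have fin: "finite ?S" by (rule finite_subset) simp
  have im: "(\<lambda>(i,j). s j) ` ?S \<subseteq> {1..n}"
  proof
    fix y assume "y \<in> (\<lambda>(i,j). s j) ` ?S"
    then obtain i j where ij: "(i, j) \<in> ?S" "y = s j" by auto
    then have "j \<in> {1..n}" by simp
    then show "y \<in> {1..n}" using ij(2) s_in by blast
  qed
  have "card ?S = (\<Sum>x\<in>{1..n}. card {y \<in> ?S. (\<lambda>(i,j). s j) y = x})"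
    by (rule card_fibers[OF fin im]) simp
  also have "\<dots> = (\<Sum>x\<in>{1..n}. sR n s x)" by (rule sum.cong) (rule refl, rule fib2_31)
  finally show ?thesis by (simp add: pat2_31_def)
qed

lemma des_card: "des n s = card {x \<in> {1..n}. sdesc s x}"
proof -
  have inj: "inj s" using sp permutes_inj by blast
  have "s ` {i \<in> {1..<n}. s i > s (Suc i)} = {x \<in> {1..n}. sdesc s x}"
  proof (rule set_eqI, rule iffI)
    fix x assume "x \<in> s ` {i \<in> {1..<n}. s i > s (Suc i)}"
    then obtain i where i: "x = s i" "i \<in> {1..<n}" "s i > s (Suc i)" by auto
    then have "i \<in> {1..n}" by auto
    then have "s i \<in> {1..n}" by (rule s_in)
    moreover have "sdesc s (s i)" using i(3) by (simp add: sdesc_def inv_si)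
    ultimately show "x \<in> {x \<in> {1..n}. sdesc s x}" using i(1) by simp
  next
    fix x assume x: "x \<in> {x \<in> {1..n}. sdesc s x}"
    let ?p = "inv s x"
    have p: "?p \<in> {1..n}" "s ?p = x" using inv_in x si_inv by auto
    have d: "s (Suc ?p) < x" using x by (simp add: sdesc_def)
    have "?p < n" using sn1[of "Suc ?p"] d p s_in[OF p(1)] by (cases "?p < n") auto
    then show "x \<in> s ` {i \<in> {1..<n}. s i > s (Suc i)}" using p d by (auto intro!: image_eqI[of _ _ ?p])
  qed
  moreover have "card (s ` {i \<in> {1..<n}. s i > s (Suc i)}) = card {i \<in> {1..<n}. s i > s (Suc i)}"
    by (rule card_image) (rule inj_on_subset[OF inj subset_UNIV])
  ultimately show ?thesis unfolding des_def by simp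
qed

lemma fmax_iff:
  assumes i: "i \<in> {1..n}"
  shows "(\<forall>j\<in>{1..i}. s j \<le> s i) \<longleftrightarrow> \<not> sleft s (s i) \<and> sL n s (s i) = 0"
proof
  assume a: "\<forall>j\<in>{1..i}. s j \<le> s i"
  have "\<not> sleft s (s i)"
  proof (cases "i = 1")
    case True then show ?thesis by (simp add: sleft_def inv_si s0)
  next
    case False then have "i - 1 \<in> {1..i}" using i by auto
    then have "s (i - 1) \<le> s i" using a by blast
    then show ?thesis by (simp add: sleft_def inv_si)
  qed
  moreover have "{k \<in> {1..n}. k + 1 < inv s (s i) \<and> s k > s i \<and> s i > s (k + 1)} = {}"
  proof -
    have "\<And>k. k \<in> {1..n} \<Longrightarrow> k + 1 < i \<Longrightarrow> s k \<le> s i" using a by auto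
    then show ?thesis by (force simp: inv_si)
  qed
  ultimately show "\<not> sleft s (s i) \<and> sL n s (s i) = 0" by (simp add: sL_def)
next
  assume b: "\<not> sleft s (s i) \<and> sL n s (s i) = 0"
  have fin: "finite {k \<in> {1..n}. k + 1 < i \<and> s k > s i \<and> s i > s (k + 1)}" by auto
  have emp: "{k \<in> {1..n}. k + 1 < i \<and> s k > s i \<and> s i > s (k + 1)} = {}"
    using b card_0_eq[OF fin] by (simp add: sL_def inv_si)
  show "\<forall>j\<in>{1..i}. s j \<le> s i"
  proof (rule ccontr)
    assume "\<not> (\<forall>j\<in>{1..i}. s j \<le> s i)"
    then have ne: "{j. 1 \<le> j \<and> j < i \<and> s j > s i} \<noteq> {}" by (auto simp: le_less)
    define m where "m = Max {j. 1 \<le> j \<and> j < i \<and> s j > s i}"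
    have finm: "finite {j. 1 \<le> j \<and> j < i \<and> s j > s i}" by auto
    have m: "1 \<le> m" "m < i" "s m > s i" using Max_in[OF finm ne] unfolding m_def by auto
    have mx: "\<And>j. 1 \<le> j \<Longrightarrow> j < i \<Longrightarrow> s j > s i \<Longrightarrow> j \<le> m" using Max_ge[OF finm] unfolding m_def by auto
    show False
    proof (cases "m + 1 = i")
      case True
      then have "i - 1 = m" by simp
      then have "sleft s (s i)" using m by (simp add: sleft_def inv_si)
      then show False using b by simp
    next
      case False
      then have mi: "m + 1 < i" using m by simp
      have "\<not> s (m + 1) > s i" using mx[of "m+1"] mi by fastforce
      moreover have "s (m + 1) \<noteq> s i" using mi s_inj by (metis less_irrefl)
      ultimately have "s i > s (m + 1)" by simp
      then have "m \<in> {k \<in> {1..n}. k + 1 < i \<and> s k > s i \<and> s i > s (k + 1)}" using m mi i by auto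
      then show False using emp by blast
    qed
  qed
qed

lemma fmax_card: "fmax n s = card {x \<in> {1..n}. \<not> sdesc s x \<and> \<not> sleft s x \<and> sL n s x = 0}"
proof -
  have inj: "inj s" using sp permutes_inj by blast
  have nd: "\<not> (i < n \<and> s i > s (Suc i)) \<longleftrightarrow> \<not> sdesc s (s i)" if i: "i \<in> {1..n}" for i
  proof -
    have "i = n \<Longrightarrow> s (Suc i) = Suc n" using sn1 by simp
    moreover have "s i \<le> n" using s_in[OF i] by simp
    ultimately show ?thesis using i by (auto simp: sdesc_def inv_si)
  qed
  have "s ` {i \<in> {1..n}. \<not> (i < n \<and> s i > s (Suc i)) \<and> (\<forall>j \<in> {1..i}. s j \<le> s i)}
     = {x \<in> {1..n}. \<not> sdesc s x \<and> \<not> sleft s x \<and> sL n s x = 0}"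
  proof (rule set_eqI, rule iffI)
    fix x assume "x \<in> s ` {i \<in> {1..n}. \<not> (i < n \<and> s i > s (Suc i)) \<and> (\<forall>j \<in> {1..i}. s j \<le> s i)}"
    then obtain i where i: "x = s i" "i \<in> {1..n}" "\<not> (i < n \<and> s i > s (Suc i))" "\<forall>j \<in> {1..i}. s j \<le> s i"
      by auto
    then show "x \<in> {x \<in> {1..n}. \<not> sdesc s x \<and> \<not> sleft s x \<and> sL n s x = 0}"
      using nd[OF i(2)] fmax_iff[OF i(2)] s_in[OF i(2)] by auto
  next
    fix x assume x: "x \<in> {x \<in> {1..n}. \<not> sdesc s x \<and> \<not> sleft s x \<and> sL n s x = 0}"
    let ?p = "inv s x"
    have p: "?p \<in> {1..n}" "s ?p = x" using inv_in x si_inv by auto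
    show "x \<in> s ` {i \<in> {1..n}. \<not> (i < n \<and> s i > s (Suc i)) \<and> (\<forall>j \<in> {1..i}. s j \<le> s i)}"
      using nd[OF p(1)] fmax_iff[OF p(1)] p x by (auto intro!: image_eqI[of _ _ ?p])
  qed
  moreover have "card (s ` {i \<in> {1..n}. \<not> (i < n \<and> s i > s (Suc i)) \<and> (\<forall>j \<in> {1..i}. s j \<le> s i)})
     = card {i \<in> {1..n}. \<not> (i < n \<and> s i > s (Suc i)) \<and> (\<forall>j \<in> {1..i}. s j \<le> s i)}"
    by (rule card_image) (rule inj_on_subset[OF inj subset_UNIV])
  ultimately show ?thesis unfolding fmax_def by simp
qed

lemma shist_HT: "HT (shist n s) = (ndes n s, fmax n s, pat31_2 n s, pat2_31 n s, MAD n s)"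
proof -
  have D: "hD (shist n s) = des n s"
  proof -
    have "hD (shist n s) = (\<Sum>i<n. if sdesc s (Suc i) then 1 else 0)"
      unfolding hD_def shist_len by (rule sum.cong) (auto simp: shist_nth sty_def)
    also have "\<dots> = (\<Sum>x\<in>{1..n}. if sdesc s x then 1 else 0)" by (simp add: sum.atLeast1_atMost_eq)
    also have "\<dots> = card {x \<in> {1..n}. sdesc s x}" by (rule card_filter_sum[symmetric]) simp
    also have "\<dots> = des n s" by (simp add: des_card)
    finally show ?thesis .
  qed
  have F: "hF (shist n s) = fmax n s"
  proof -
    have "hF (shist n s) = (\<Sum>i<n. if \<not> sdesc s (Suc i) \<and> \<not> sleft s (Suc i) \<and> sL n s (Suc i) = 0 then 1 else 0)"
      unfolding hF_def shist_len by (rule sum.cong) (auto simp: shist_nth sty_def)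
    also have "\<dots> = (\<Sum>x\<in>{1..n}. if \<not> sdesc s x \<and> \<not> sleft s x \<and> sL n s x = 0 then 1 else 0)"
      by (simp add: sum.atLeast1_atMost_eq)
    also have "\<dots> = card {x \<in> {1..n}. \<not> sdesc s x \<and> \<not> sleft s x \<and> sL n s x = 0}"
      by (rule card_filter_sum[symmetric]) simp
    also have "\<dots> = fmax n s" by (simp add: fmax_card)
    finally show ?thesis .
  qed
  have G: "hG (shist n s) = pat31_2 n s"
  proof -
    have "hG (shist n s) = (\<Sum>i<n. sL n s (Suc i))"
      unfolding hG_def shist_len by (rule sum.cong) (auto simp: shist_nth)
    also have "\<dots> = pat31_2 n s" by (simp add: sum.atLeast1_atMost_eq pat31_2_sum)
    finally show ?thesis .
  qed
  have Q: "hQ (shist n s) = pat2_31 n s"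
  proof -
    have "hQ (shist n s) = (\<Sum>i<n. sR n s (Suc i))"
      unfolding hQ_def shist_len
    proof (rule sum.cong)
      fix i assume "i \<in> {..<n}"
      then have i: "i < n" "Suc i \<in> {1..n}" by auto
      show "the (runh 0 (take i (shist n s))) - snd (shist n s ! i) - (if fst (shist n s ! i) < 2 then 1 else 0)
            = sR n s (Suc i)"
        using shist_take[of i] i sN_split[OF i(2)] by (simp add: shist_nth sty_def)
    qed simp
    also have "\<dots> = pat2_31 n s" by (simp add: sum.atLeast1_atMost_eq pat2_31_sum)
    finally show ?thesis .
  qed
  show ?thesis using D F G Q by (simp add: HT_def shist_len ndes_def MAD_def)
qed


lemma sL_alt: "y \<in> {1..n} \<Longrightarrow> sL n s y = card {k \<in> {1..n}. k < inv s y \<and> s (k - 1) > y \<and> s k < y}"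
proof -
  assume y: "y \<in> {1..n}"
  let ?p = "inv s y"
  have p: "?p \<in> {1..n}" "s ?p = y" using inv_in[OF y] si_inv by auto
  have "{k \<in> {1..n}. k < ?p \<and> s (k - 1) > y \<and> s k < y} = Suc ` {i \<in> {1..n}. i + 1 < ?p \<and> s i > y \<and> y > s (i + 1)}"
  proof (rule set_eqI, rule iffI)
    fix k assume k: "k \<in> {k \<in> {1..n}. k < ?p \<and> s (k - 1) > y \<and> s k < y}"
    then have "k \<noteq> 1" using s0 by auto
    then have "k - 1 \<in> {1..n}" "k = Suc (k - 1)" using k by auto
    then show "k \<in> Suc ` {i \<in> {1..n}. i + 1 < ?p \<and> s i > y \<and> y > s (i + 1)}"
      using k by (auto simp: image_iff intro!: bexI[of _ "k - 1"])
  next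
    fix k assume "k \<in> Suc ` {i \<in> {1..n}. i + 1 < ?p \<and> s i > y \<and> y > s (i + 1)}"
    then obtain i where i: "k = Suc i" "i \<in> {1..n}" "i + 1 < ?p" "s i > y" "y > s (i + 1)" by auto
    then show "k \<in> {k \<in> {1..n}. k < ?p \<and> s (k - 1) > y \<and> s k < y}" using p by auto
  qed
  then show ?thesis by (simp add: sL_def card_image)
qed

lemma GS_prev: "y \<in> {1..n} \<Longrightarrow> sGS n s y (y - 1) = {k \<in> {1..n}. k < inv s y \<and> s (k - 1) > y \<and> s k < y}"
proof -
  assume y: "y \<in> {1..n}"
  let ?p = "inv s y"
  have p: "?p \<in> {1..n}" "s ?p = y" using inv_in[OF y] si_inv by auto
  show ?thesis
  proof (rule set_eqI, rule iffI)
    fix k assume k: "k \<in> sGS n s y (y - 1)"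
    then have k1: "k \<in> {1..n}" "k \<le> ?p" "s (k - 1) > y - 1" "s k \<le> y - 1" by (auto simp: sGS_def)
    have "k \<noteq> ?p" using k1 p y by auto
    then have kp: "k < ?p" using k1 by simp
    then have "k - 1 \<noteq> ?p" by simp
    then have "s (k - 1) \<noteq> y" using p(2) s_inj by metis
    then show "k \<in> {k \<in> {1..n}. k < ?p \<and> s (k - 1) > y \<and> s k < y}" using k1 kp y by auto
  next
    fix k assume "k \<in> {k \<in> {1..n}. k < ?p \<and> s (k - 1) > y \<and> s k < y}"
    then show "k \<in> sGS n s y (y - 1)" by (auto simp: sGS_def)
  qed
qed

lemma GS_prev_card: "y \<in> {1..n} \<Longrightarrow> card (sGS n s y (y - 1)) = sL n s y"
  using GS_prev sL_alt by simp

lemma GS_base: "x \<in> {1..n} \<Longrightarrow> card (sGS n s x x) = sL n s x + (if sleft s x then 1 else 0)"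
proof -
  assume x: "x \<in> {1..n}"
  let ?p = "inv s x"
  have p: "?p \<in> {1..n}" "s ?p = x" using inv_in[OF x] si_inv by auto
  let ?A = "{k \<in> {1..n}. k < ?p \<and> s (k - 1) > x \<and> s k < x}"
  have eq: "sGS n s x x = ?A \<union> (if sleft s x then {?p} else {})"
  proof (rule set_eqI, rule iffI)
    fix k assume k: "k \<in> sGS n s x x"
    then have k1: "k \<in> {1..n}" "k \<le> ?p" "s (k - 1) > x" "s k \<le> x" by (auto simp: sGS_def)
    show "k \<in> ?A \<union> (if sleft s x then {?p} else {})"
    proof (cases "k = ?p")
      case True then show ?thesis using k1 by (simp add: sleft_def)
    next
      case False
      then have "s k \<noteq> x" using p(2) s_inj by metis
      then show ?thesis using k1 False by auto
    qed
  next
    fix k assume "k \<in> ?A \<union> (if sleft s x then {?p} else {})"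
    then show "k \<in> sGS n s x x" using p by (auto simp: sGS_def sleft_def split: if_splits)
  qed
  have "?p \<notin> ?A" by simp
  then have "card (sGS n s x x) = card ?A + (if sleft s x then 1 else 0)"
    unfolding eq by (cases "sleft s x") auto
  then show ?thesis using sL_alt[OF x] by simp
qed

lemma GS_step:
  assumes x: "x \<in> {1..n}" and t: "x \<le> t" "t < n"
  shows "card (sGS n s x (Suc t)) + (if inv s (Suc t) < inv s x \<and> sdesc s (Suc t) then 1 else 0)
       = card (sGS n s x t) + (if inv s (Suc t) < inv s x \<and> sleft s (Suc t) then 1 else 0)"
proof -
  let ?p = "inv s x" and ?q = "inv s (Suc t)"
  have p: "?p \<in> {1..n}" "s ?p = x" using inv_in[OF x] si_inv by auto
  have st: "Suc t \<in> {1..n}" using t by auto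
  have q: "?q \<in> {1..n}" "s ?q = Suc t" using inv_in[OF st] si_inv by auto
  have qp: "?q \<noteq> ?p" using p(2) q(2) t by auto
  have eq: "sGS n s x (Suc t) - {?q} = sGS n s x t - {?q + 1}"
  proof (rule set_eqI, rule iffI)
    fix k assume k: "k \<in> sGS n s x (Suc t) - {?q}"
    then have k1: "k \<in> {1..n}" "k \<le> ?p" "s (k - 1) > Suc t" "s k \<le> Suc t" "k \<noteq> ?q" by (auto simp: sGS_def)
    have "s k \<noteq> Suc t" using k1(5) q(2) s_inj by metis
    moreover have "k \<noteq> ?q + 1" using k1(3) q(2) by auto
    ultimately show "k \<in> sGS n s x t - {?q + 1}" using k1 by (auto simp: sGS_def)
  next
    fix k assume k: "k \<in> sGS n s x t - {?q + 1}"
    then have k1: "k \<in> {1..n}" "k \<le> ?p" "s (k - 1) > t" "s k \<le> t" "k \<noteq> ?q + 1" by (auto simp: sGS_def)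
    have "k - 1 \<noteq> ?q" using k1 by auto
    then have "s (k - 1) \<noteq> Suc t" using q(2) s_inj by metis
    moreover have "k \<noteq> ?q" using k1(4) q(2) by auto
    ultimately show "k \<in> sGS n s x (Suc t) - {?q}" using k1 by (auto simp: sGS_def)
  qed
  have a: "(?q \<in> sGS n s x (Suc t)) = (?q < ?p \<and> sleft s (Suc t))"
    using q qp by (auto simp: sGS_def sleft_def)
  have b: "(?q + 1 \<in> sGS n s x t) = (?q < ?p \<and> sdesc s (Suc t))"
  proof
    assume "?q + 1 \<in> sGS n s x t"
    then show "?q < ?p \<and> sdesc s (Suc t)" by (auto simp: sGS_def sdesc_def)
  next
    assume "?q < ?p \<and> sdesc s (Suc t)"
    then show "?q + 1 \<in> sGS n s x t" using p q by (auto simp: sGS_def sdesc_def)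
  qed
  have "card (sGS n s x (Suc t)) + (if ?q + 1 \<in> sGS n s x t then 1 else 0)
      = card (sGS n s x t) + (if ?q \<in> sGS n s x (Suc t) then 1 else 0)"
    by (rule card_swap1[OF _ _ eq]) (auto simp: sGS_def)
  then show ?thesis using a b by simp
qed

lemma GS_rel:
  assumes x: "x \<in> {1..n}" and y: "y \<in> {1..n}" and xy: "x < y"
  shows "inv s y < inv s x \<longleftrightarrow> sL n s y < card (sGS n s x (y - 1))"
proof -
  let ?p = "inv s x" and ?q = "inv s y"
  have p: "?p \<in> {1..n}" "s ?p = x" using inv_in[OF x] si_inv by auto
  have q: "?q \<in> {1..n}" "s ?q = y" using inv_in[OF y] si_inv by auto
  have finx: "finite (sGS n s x (y - 1))" by (simp add: sGS_def)
  have L: "sL n s y = card (sGS n s y (y - 1))" using GS_prev_card[OF y] by simp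
  show ?thesis
  proof
    assume qp: "?q < ?p"
    have sub: "sGS n s y (y - 1) \<subseteq> sGS n s x (y - 1)" using qp by (auto simp: sGS_def)
    define M where "M = {k. ?q < k \<and> k \<le> ?p \<and> s k \<le> y - 1}"
    have "?p \<in> M" using qp p xy by (auto simp: M_def)
    then have ne: "M \<noteq> {}" by auto
    have finM: "finite M" by (auto simp: M_def)
    define k0 where "k0 = Min M"
    have k0: "?q < k0" "k0 \<le> ?p" "s k0 \<le> y - 1" using Min_in[OF finM ne] unfolding k0_def M_def by auto
    have mn: "\<And>k. k \<in> M \<Longrightarrow> k0 \<le> k" using Min_le[OF finM] unfolding k0_def by auto
    have "s (k0 - 1) > y - 1"
    proof (cases "k0 - 1 = ?q")
      case True then show ?thesis using q y by auto
    next
      case False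
      then have "?q < k0 - 1" "k0 - 1 \<le> ?p" using k0 by auto
      moreover have "\<not> k0 \<le> k0 - 1" using k0 by auto
      ultimately show ?thesis using mn[of "k0 - 1"] unfolding M_def by force
    qed
    then have "k0 \<in> sGS n s x (y - 1)" using k0 p q by (auto simp: sGS_def)
    moreover have "k0 \<notin> sGS n s y (y - 1)" using k0 by (auto simp: sGS_def)
    ultimately have "sGS n s y (y - 1) \<subset> sGS n s x (y - 1)" using sub by blast
    then show "sL n s y < card (sGS n s x (y - 1))" using L finx by (simp add: psubset_card_mono)
  next
    assume lt: "sL n s y < card (sGS n s x (y - 1))"
    show "?q < ?p"
    proof (rule ccontr)
      assume "\<not> ?q < ?p"
      moreover have "?q \<noteq> ?p"
      proof
        assume "?q = ?p"
        then have "y = x" using p(2) q(2) by metis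
        then show False using xy by simp
      qed
      ultimately have "?p < ?q" by simp
      then have "sGS n s x (y - 1) \<subseteq> sGS n s y (y - 1)" by (auto simp: sGS_def)
      then have "card (sGS n s x (y - 1)) \<le> card (sGS n s y (y - 1))" by (rule card_mono[rotated]) (simp add: sGS_def)
      then show False using lt L by simp
    qed
  qed
qed

end

lemma perm_order_eq:
  fixes n :: nat
  assumes p1: "p1 permutes {1..n}" and p2: "p2 permutes {1..n}"
    and ord: "\<And>x y. x \<in> {1..n} \<Longrightarrow> y \<in> {1..n} \<Longrightarrow> p1 x < p1 y \<longleftrightarrow> p2 x < p2 y"
  shows "p1 = p2"
proof
  fix x
  show "p1 x = p2 x"
  proof (cases "x \<in> {1..n}")
    case False then show ?thesis using p1 p2 by (simp add: permutes_not_in)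
  next
    case True
    have key: "card {y \<in> {1..n}. p y < p x} = p x - 1" if p: "p permutes {1..n}" for p :: "nat \<Rightarrow> nat"
    proof -
      have inj: "inj p" using p permutes_inj by blast
      have "p ` {y \<in> {1..n}. p y < p x} = {1..<p x}"
      proof (rule set_eqI, rule iffI)
        fix v assume "v \<in> p ` {y \<in> {1..n}. p y < p x}"
        then obtain y where "v = p y" "y \<in> {1..n}" "p y < p x" by auto
        then show "v \<in> {1..<p x}" using permutes_in_image[OF p, of y] by auto
      next
        fix v assume v: "v \<in> {1..<p x}"
        have "p x \<in> {1..n}" using permutes_in_image[OF p] True by blast
        then have vin: "v \<in> {1..n}" using v by auto
        have "p (inv p v) = v" using p by (simp add: permutes_inverses)
        moreover have "inv p v \<in> {1..n}" using permutes_in_image[OF permutes_inv[OF p]] vin by blast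
        ultimately show "v \<in> p ` {y \<in> {1..n}. p y < p x}" using v by (auto intro!: image_eqI[of _ _ "inv p v"])
      qed
      moreover have "card (p ` {y \<in> {1..n}. p y < p x}) = card {y \<in> {1..n}. p y < p x}"
        by (rule card_image) (rule inj_on_subset[OF inj subset_UNIV])
      ultimately show ?thesis by simp
    qed
    have "{y \<in> {1..n}. p1 y < p1 x} = {y \<in> {1..n}. p2 y < p2 x}" using ord True by auto
    then have "p1 x - 1 = p2 x - 1" using key[OF p1] key[OF p2] by simp
    moreover have "p1 x \<ge> 1" "p2 x \<ge> 1"
      using permutes_in_image[OF p1] permutes_in_image[OF p2] True by fastforce+
    ultimately show ?thesis by simp
  qed
qed

lemma sty_eq: "sty s x = sty s' x \<Longrightarrow> sdesc s x = sdesc s' x \<and> sleft s x = sleft s' x"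
  by (auto simp: sty_def split: if_splits)

lemma shist_inj:
  assumes s1: "s1 permutes {1..n}" and s2: "s2 permutes {1..n}" and h: "shist n s1 = shist n s2"
  shows "s1 = s2"
proof -
  have e: "sty s1 x = sty s2 x \<and> sL n s1 x = sL n s2 x" if x: "x \<in> {1..n}" for x
  proof -
    have "x - 1 < n" using x by auto
    then have "shist n s1 ! (x - 1) = shist n s2 ! (x - 1)" using h by simp
    then show ?thesis using shist_nth[OF s1 \<open>x - 1 < n\<close>] shist_nth[OF s2 \<open>x - 1 < n\<close>] x by auto
  qed
  have G: "card (sGS n s1 x (x + d)) = card (sGS n s2 x (x + d))" if x: "x \<in> {1..n}" and d: "x + d \<le> n" for x d
    using d
  proof (induction d)
    case 0
    have "sleft s1 x = sleft s2 x" using e[OF x] sty_eq by blast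
    then show ?case using GS_base[OF s1 x] GS_base[OF s2 x] e[OF x] by simp
  next
    case (Suc d)
    let ?t = "x + d"
    have t: "x \<le> ?t" "?t < n" using Suc by auto
    have st: "Suc ?t \<in> {1..n}" using t by auto
    have xl: "x < Suc ?t" by simp
    have r1: "inv s1 (Suc ?t) < inv s1 x \<longleftrightarrow> sL n s1 (Suc ?t) < card (sGS n s1 x ?t)"
      using GS_rel[OF s1 x st xl] by simp
    have r2: "inv s2 (Suc ?t) < inv s2 x \<longleftrightarrow> sL n s2 (Suc ?t) < card (sGS n s2 x ?t)"
      using GS_rel[OF s2 x st xl] by simp
    have ih: "card (sGS n s1 x ?t) = card (sGS n s2 x ?t)" using Suc by simp
    have same: "inv s1 (Suc ?t) < inv s1 x \<longleftrightarrow> inv s2 (Suc ?t) < inv s2 x" using r1 r2 ih e[OF st] by simp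
    have dd: "sdesc s1 (Suc ?t) = sdesc s2 (Suc ?t)" "sleft s1 (Suc ?t) = sleft s2 (Suc ?t)"
      using e[OF st] sty_eq by blast+
    have g1: "card (sGS n s1 x (Suc ?t)) + (if inv s1 (Suc ?t) < inv s1 x \<and> sdesc s1 (Suc ?t) then 1 else 0)
       = card (sGS n s1 x ?t) + (if inv s1 (Suc ?t) < inv s1 x \<and> sleft s1 (Suc ?t) then 1 else 0)"
      by (rule GS_step[OF s1 x t])
    have g2: "card (sGS n s2 x (Suc ?t)) + (if inv s1 (Suc ?t) < inv s1 x \<and> sdesc s1 (Suc ?t) then 1 else 0)
       = card (sGS n s2 x ?t) + (if inv s1 (Suc ?t) < inv s1 x \<and> sleft s1 (Suc ?t) then 1 else 0)"
      using GS_step[OF s2 x t] same dd by simp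
    have "card (sGS n s1 x (Suc ?t)) = card (sGS n s2 x (Suc ?t))" using g1 g2 ih by linarith
    then show ?case by simp
  qed
  have rel: "inv s1 y < inv s1 x \<longleftrightarrow> inv s2 y < inv s2 x" if x: "x \<in> {1..n}" and y: "y \<in> {1..n}" and xy: "x < y" for x y
  proof -
    define d where "d = y - 1 - x"
    have d: "y - 1 = x + d" using xy unfolding d_def by linarith
    have "x + d \<le> n" using d y by auto
    then have "card (sGS n s1 x (y - 1)) = card (sGS n s2 x (y - 1))" using G[OF x] d by simp
    then show ?thesis using GS_rel[OF s1 x y xy] GS_rel[OF s2 x y xy] e[OF y] by simp
  qed
  have i1: "inv s1 permutes {1..n}" and i2: "inv s2 permutes {1..n}" using s1 s2 by (auto intro: permutes_inv)
  have ord: "inv s1 x < inv s1 y \<longleftrightarrow> inv s2 x < inv s2 y" if x: "x \<in> {1..n}" and y: "y \<in> {1..n}" for x y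
  proof -
    have inj1: "inv s1 x = inv s1 y \<longleftrightarrow> x = y" by (metis permutes_inverses(1)[OF s1])
    have inj2: "inv s2 x = inv s2 y \<longleftrightarrow> x = y" by (metis permutes_inverses(1)[OF s2])
    consider "x = y" | "x < y" | "y < x" by linarith
    then show ?thesis
    proof cases
      case 1 then show ?thesis by simp
    next
      case 2
      then have "inv s1 x \<noteq> inv s1 y" "inv s2 x \<noteq> inv s2 y" using inj1 inj2 by auto
      then have a: "inv s1 x < inv s1 y \<longleftrightarrow> \<not> inv s1 y < inv s1 x"
        and b: "inv s2 x < inv s2 y \<longleftrightarrow> \<not> inv s2 y < inv s2 x" by auto
      show ?thesis using a b rel[OF x y 2] by simp
    next
      case 3 then show ?thesis using rel[OF y x] by simp
    qed
  qed
  have "inv s1 = inv s2" by (rule perm_order_eq[OF i1 i2 ord])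
  then show ?thesis using s1 s2 by (metis permutes_inv_inv)
qed



definition tty :: "(nat \<Rightarrow> nat) \<Rightarrow> nat \<Rightarrow> nat" where
  "tty u t = (if u t < t then (if inv u t < t then 0 else 1) else (if inv u t \<le> t then 2 else 3))"
definition tuc :: "nat \<Rightarrow> (nat \<Rightarrow> nat) \<Rightarrow> nat \<Rightarrow> nat" where
  "tuc n u t = card {j \<in> {1..n}. inv u t < j \<and> j \<le> t \<and> t < u j}"
definition tlc :: "nat \<Rightarrow> (nat \<Rightarrow> nat) \<Rightarrow> nat \<Rightarrow> nat" where
  "tlc n u t = card {i \<in> {1..n}. u i < t \<and> t < i \<and> i < inv u t}"
definition tun :: "nat \<Rightarrow> (nat \<Rightarrow> nat) \<Rightarrow> nat \<Rightarrow> nat" where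
  "tun n u t = card {i \<in> {1..n}. i < inv u t \<and> inv u t \<le> t \<and> t < u i}"
definition tln :: "nat \<Rightarrow> (nat \<Rightarrow> nat) \<Rightarrow> nat \<Rightarrow> nat" where
  "tln n u t = card {j \<in> {1..n}. u j < t \<and> t < inv u t \<and> inv u t < j}"
definition tg :: "nat \<Rightarrow> (nat \<Rightarrow> nat) \<Rightarrow> nat \<Rightarrow> nat" where
  "tg n u t = tuc n u t + tlc n u t"
definition tq :: "nat \<Rightarrow> (nat \<Rightarrow> nat) \<Rightarrow> nat \<Rightarrow> nat" where
  "tq n u t = tun n u t + tln n u t"
definition tH :: "nat \<Rightarrow> (nat \<Rightarrow> nat) \<Rightarrow> nat \<Rightarrow> nat" where
  "tH n u t = card {i \<in> {1..n}. i < t \<and> t \<le> u i}"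
definition thist :: "nat \<Rightarrow> (nat \<Rightarrow> nat) \<Rightarrow> (nat \<times> nat) list" where
  "thist n u = map (\<lambda>t. (tty u t, tg n u t)) [1..<Suc n]"

definition ind :: "bool \<Rightarrow> nat" where "ind b = (if b then 1 else 0)"

lemma card_ind: "finite A \<Longrightarrow> card {x\<in>A. P x} = (\<Sum>x\<in>A. ind (P x))"
  unfolding ind_def by (rule card_filter_sum)

lemma sum_ind_eq: "a \<in> A \<Longrightarrow> finite A \<Longrightarrow> (\<Sum>x\<in>A. ind (x = a)) = 1"
  unfolding ind_def by simp

lemma sum_ind_single: "a \<in> A \<Longrightarrow> finite A \<Longrightarrow> (\<Sum>x\<in>A. ind (x = a \<and> P)) = ind P"
proof -
  assume a: "a \<in> A" and f: "finite A"
  have "(\<Sum>x\<in>A. ind (x = a \<and> P)) = (\<Sum>x\<in>A. if x = a then ind P else 0)"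
    by (rule sum.cong) (auto simp: ind_def)
  also have "\<dots> = ind P" using a f by (simp add: sum.delta)
  finally show ?thesis .
qed

lemma card_pairs_fst: "finite A \<Longrightarrow> card {(i,j). i \<in> A \<and> j \<in> A \<and> P i j} = (\<Sum>i\<in>A. card {j \<in> A. P i j})"
proof -
  assume f: "finite A"
  have "{(i,j). i \<in> A \<and> j \<in> A \<and> P i j} = (SIGMA i:A. {j \<in> A. P i j})" by auto
  then show ?thesis using f by (simp add: card_SigmaI)
qed

lemma card_pairs_snd: "finite A \<Longrightarrow> card {(i,j). i \<in> A \<and> j \<in> A \<and> P i j} = (\<Sum>j\<in>A. card {i \<in> A. P i j})"
proof -
  assume f: "finite A"
  have "{(i,j). i \<in> A \<and> j \<in> A \<and> P i j} = (\<lambda>(j,i). (i,j)) ` {(j,i). j \<in> A \<and> i \<in> A \<and> P i j}" by auto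
  moreover have "inj_on (\<lambda>(j,i). (i,j)) {(j,i). j \<in> A \<and> i \<in> A \<and> P i j}" by (auto simp: inj_on_def)
  ultimately have "card {(i,j). i \<in> A \<and> j \<in> A \<and> P i j} = card {(j,i). j \<in> A \<and> i \<in> A \<and> P i j}"
    by (simp add: card_image)
  also have "\<dots> = (\<Sum>j\<in>A. card {i \<in> A. P i j})" using card_pairs_fst[OF f, of "\<lambda>j i. P i j"] by simp
  finally show ?thesis .
qed

context
  fixes n :: nat and u :: "nat \<Rightarrow> nat"
  assumes up: "u permutes {1..n}"
begin

lemma u0: "i \<notin> {1..n} \<Longrightarrow> u i = i" using up by (simp add: permutes_not_in)
lemma u_in: "i \<in> {1..n} \<Longrightarrow> u i \<in> {1..n}" using permutes_in_image[OF up] by blast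
lemma ui_inv: "u (inv u x) = x" using up by (simp add: permutes_inverses)
lemma inv_ui: "inv u (u i) = i" using up by (simp add: permutes_inverses)
lemma uinv_in: "x \<in> {1..n} \<Longrightarrow> inv u x \<in> {1..n}"
  using permutes_in_image[OF permutes_inv[OF up]] by blast
lemma u_inj: "u i = u j \<longleftrightarrow> i = j" by (metis inv_ui)
lemma u_eq_iff: "u i = t \<longleftrightarrow> i = inv u t" using u_inj ui_inv by metis

lemma sum_perm_ind: "(\<Sum>i\<in>{1..n}. ind (P (u i))) = (\<Sum>i\<in>{1..n}. ind (P i))"
  using sum.permute[OF up, of "\<lambda>i. ind (P i)"] by (simp add: comp_def)

lemma count_less: "v \<le> Suc n \<Longrightarrow> (\<Sum>i\<in>{1..n}. ind (i < v)) = v - 1"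
proof -
  assume v: "v \<le> Suc n"
  have "(\<Sum>i\<in>{1..n}. ind (i < v)) = card {i \<in> {1..n}. i < v}" by (rule card_ind[symmetric]) simp
  also have "{i \<in> {1..n}. i < v} = {1..<v}" using v by auto
  finally show ?thesis by simp
qed

lemma count_uless: "v \<le> Suc n \<Longrightarrow> (\<Sum>i\<in>{1..n}. ind (u i < v)) = v - 1"
  using sum_perm_ind[of "\<lambda>x. x < v"] count_less by simp

lemma balance: "tH n u t = card {j \<in> {1..n}. t \<le> j \<and> u j < t}"
proof (cases "t \<le> Suc n")
  case True
  have a: "(\<Sum>i\<in>{1..n}. ind (i < t)) = (\<Sum>i\<in>{1..n}. ind (u i < t))"
    using count_less[OF True] count_uless[OF True] by simp
  have b: "(\<Sum>i\<in>{1..n}. ind (i < t)) = (\<Sum>i\<in>{1..n}. ind (i < t \<and> u i < t)) + (\<Sum>i\<in>{1..n}. ind (i < t \<and> t \<le> u i))"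
    by (simp add: sum.distrib[symmetric], rule sum.cong) (auto simp: ind_def)
  have c: "(\<Sum>i\<in>{1..n}. ind (u i < t)) = (\<Sum>i\<in>{1..n}. ind (i < t \<and> u i < t)) + (\<Sum>i\<in>{1..n}. ind (t \<le> i \<and> u i < t))"
    by (simp add: sum.distrib[symmetric], rule sum.cong) (auto simp: ind_def)
  have d: "tH n u t = (\<Sum>i\<in>{1..n}. ind (i < t \<and> t \<le> u i))" unfolding tH_def by (rule card_ind) simp
  have e: "card {j \<in> {1..n}. t \<le> j \<and> u j < t} = (\<Sum>i\<in>{1..n}. ind (t \<le> i \<and> u i < t))" by (rule card_ind) simp
  show ?thesis using a b c d e by simp
next
  case False
  have e1: "{i \<in> {1..n}. i < t \<and> t \<le> u i} = {}" and e2: "{j \<in> {1..n}. t \<le> j \<and> u j < t} = {}"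
    using False u_in by fastforce+
  show ?thesis by (simp only: tH_def e1 e2)
qed


lemma tH_split:
  assumes t: "t \<in> {1..n}"
  shows "tH n u t = tg n u t + tq n u t + ind (u t < t)"
proof -
  define r where "r = inv u t"
  have r: "r \<in> {1..n}" "u r = t" using uinv_in[OF t] ui_inv r_def by auto
  have ueq: "\<And>i. u i = t \<longleftrightarrow> i = r" using u_eq_iff r_def by simp
  have fin: "finite {1..n::nat}" by simp
  have S1: "tuc n u t = (\<Sum>i\<in>{1..n}. ind (r < i \<and> i \<le> t \<and> t < u i))" unfolding tuc_def r_def by (rule card_ind) simp
  have S2: "tlc n u t = (\<Sum>i\<in>{1..n}. ind (u i < t \<and> t < i \<and> i < r))" unfolding tlc_def r_def by (rule card_ind) simp
  have S3: "tun n u t = (\<Sum>i\<in>{1..n}. ind (i < r \<and> r \<le> t \<and> t < u i))" unfolding tun_def r_def by (rule card_ind) simp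
  have S4: "tln n u t = (\<Sum>i\<in>{1..n}. ind (u i < t \<and> t < r \<and> r < i))" unfolding tln_def r_def by (rule card_ind) simp
  have H1: "tH n u t = (\<Sum>i\<in>{1..n}. ind (i < t \<and> t \<le> u i))" unfolding tH_def by (rule card_ind) simp
  have H2: "tH n u t = (\<Sum>i\<in>{1..n}. ind (t \<le> i \<and> u i < t))" unfolding balance by (rule card_ind) simp
  let ?R = "\<lambda>i. ind (r < i \<and> i \<le> t \<and> t < u i) + ind (u i < t \<and> t < i \<and> i < r) + ind (i < r \<and> r \<le> t \<and> t < u i) + ind (u i < t \<and> t < r \<and> r < i)"
  have sR: "(\<Sum>i\<in>{1..n}. ind (r < i \<and> i \<le> t \<and> t < u i)) + (\<Sum>i\<in>{1..n}. ind (u i < t \<and> t < i \<and> i < r))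
     + (\<Sum>i\<in>{1..n}. ind (i < r \<and> r \<le> t \<and> t < u i)) + (\<Sum>i\<in>{1..n}. ind (u i < t \<and> t < r \<and> r < i)) = tg n u t + tq n u t"
    by (simp add: S1 S2 S3 S4 tg_def tq_def)
  show ?thesis
  proof (cases "r \<le> t")
    case True
    have pw: "ind (i < t \<and> t \<le> u i) + ind (i = t \<and> t < u t) = ?R i + ind (i = r \<and> r < t)" for i
      using ueq[of i] True r unfolding ind_def by auto
    have "(\<Sum>i\<in>{1..n}. ind (i < t \<and> t \<le> u i) + ind (i = t \<and> t < u t)) = (\<Sum>i\<in>{1..n}. ?R i + ind (i = r \<and> r < t))"
      using pw by simp
    then have "tH n u t + ind (t < u t) = tg n u t + tq n u t + ind (r < t)"
      by (simp only: sum.distrib H1[symmetric] sR sum_ind_single[OF t fin] sum_ind_single[OF r(1) fin])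
    moreover have "r = t \<Longrightarrow> u t = t" using r by simp
    moreover have "r < t \<Longrightarrow> u t \<noteq> t" using ueq[of t] by simp
    ultimately show ?thesis using True unfolding ind_def by (cases "r = t") auto
  next
    case False
    have pw: "ind (t \<le> i \<and> u i < t) = ?R i + ind (i = t \<and> u t < t)" for i
      using ueq[of i] False r unfolding ind_def by auto
    have "(\<Sum>i\<in>{1..n}. ind (t \<le> i \<and> u i < t)) = (\<Sum>i\<in>{1..n}. ?R i + ind (i = t \<and> u t < t))"
      using pw by simp
    then show ?thesis
      by (simp only: sum.distrib H2[symmetric] sR sum_ind_single[OF t fin])
  qed
qed

lemma tH_step:
  assumes t: "t \<in> {1..n}"
  shows "tH n u (Suc t) + ind (inv u t < t) = tH n u t + ind (t < u t)"
proof -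
  define r where "r = inv u t"
  have r: "r \<in> {1..n}" "u r = t" using uinv_in[OF t] ui_inv r_def by auto
  have ueq: "\<And>i. u i = t \<longleftrightarrow> i = r" using u_eq_iff r_def by simp
  have fin: "finite {1..n::nat}" by simp
  have H1: "tH n u t = (\<Sum>i\<in>{1..n}. ind (i < t \<and> t \<le> u i))" unfolding tH_def by (rule card_ind) simp
  have H2: "tH n u (Suc t) = (\<Sum>i\<in>{1..n}. ind (i < Suc t \<and> Suc t \<le> u i))" unfolding tH_def by (rule card_ind) simp
  have pw: "ind (i < Suc t \<and> Suc t \<le> u i) + ind (i = r \<and> r < t) = ind (i < t \<and> t \<le> u i) + ind (i = t \<and> t < u t)" for i
  proof (cases "i = t")
    case True then show ?thesis using ueq[of i] unfolding ind_def by auto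
  next
    case False then show ?thesis using ueq[of i] unfolding ind_def by auto
  qed
  have "(\<Sum>i\<in>{1..n}. ind (i < Suc t \<and> Suc t \<le> u i) + ind (i = r \<and> r < t)) = (\<Sum>i\<in>{1..n}. ind (i < t \<and> t \<le> u i) + ind (i = t \<and> t < u t))"
    using pw by simp
  then have "tH n u (Suc t) + ind (r < t) = tH n u t + ind (t < u t)"
    by (simp only: sum.distrib H1[symmetric] H2[symmetric] sum_ind_single[OF t fin] sum_ind_single[OF r(1) fin])
  then show ?thesis by (simp add: r_def)
qed

lemma tH_1: "tH n u (Suc 0) = 0" by (simp add: tH_def)

lemma tH_end: "tH n u (Suc n) = 0"
proof -
  have "{i \<in> {1..n}. i < Suc n \<and> Suc n \<le> u i} = {}" using u_in by fastforce
  then show ?thesis by (simp add: tH_def)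
qed

lemma hstep_t:
  assumes t: "t \<in> {1..n}"
  shows "hstep (tty u t) (tg n u t) (tH n u t) = Some (tH n u (Suc t))"
proof -
  have a: "tH n u t = tg n u t + tq n u t + ind (u t < t)" by (rule tH_split[OF t])
  have b: "tH n u (Suc t) + ind (inv u t < t) = tH n u t + ind (t < u t)" by (rule tH_step[OF t])
  have c: "u t = t \<longleftrightarrow> inv u t = t" using u_eq_iff by metis
  show ?thesis
  proof (cases "u t < t")
    case True
    then have ne: "inv u t \<noteq> t" using c by auto
    show ?thesis
    proof (cases "inv u t < t")
      case True then show ?thesis using a b \<open>u t < t\<close> by (simp add: hstep_def tty_def ind_def)
    next
      case False then show ?thesis using a b \<open>u t < t\<close> ne by (simp add: hstep_def tty_def ind_def)
    qed
  next
    case False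
    show ?thesis
    proof (cases "inv u t \<le> t")
      case True then show ?thesis using a b \<open>\<not> u t < t\<close> c by (cases "u t = t") (auto simp: hstep_def tty_def ind_def)
    next
      case False then show ?thesis using a b \<open>\<not> u t < t\<close> c by (cases "u t = t") (auto simp: hstep_def tty_def ind_def)
    qed
  qed
qed

lemma runh_t: "x \<le> n \<Longrightarrow> runh 0 (map (\<lambda>t. (tty u t, tg n u t)) [1..<Suc x]) = Some (tH n u (Suc x))"
proof (induction x)
  case 0 then show ?case by (simp add: tH_1)
next
  case (Suc x)
  have "Suc x \<in> {1..n}" using Suc by auto
  then show ?case using Suc by (simp add: runh_snoc hstep_t)
qed

lemma thist_nth: "i < n \<Longrightarrow> thist n u ! i = (tty u (Suc i), tg n u (Suc i))"
  unfolding thist_def by (simp del: upt_Suc)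
lemma thist_len: "length (thist n u) = n" by (simp add: thist_def)
lemma thist_take: "i \<le> n \<Longrightarrow> runh 0 (take i (thist n u)) = Some (tH n u (Suc i))"
proof -
  assume i: "i \<le> n"
  have "take i (thist n u) = map (\<lambda>t. (tty u t, tg n u t)) [1..<Suc i]"
    using i unfolding thist_def by (simp del: upt_Suc add: take_map min_def)
  then show ?thesis using runh_t[OF i] by simp
qed
lemma thist_HS: "thist n u \<in> HS n 0"
  using thist_take[of n] tH_end by (simp add: HS_def thist_len)


lemma sum_inv_reindex: "(\<Sum>i\<in>{1..n}. f i) = (\<Sum>t\<in>{1..n}. f (inv u t))"
  using sum.permute[OF permutes_inv[OF up], of f] by (simp add: comp_def)

lemma pairs_ufst: "card {(i,j). i \<in> {1..n} \<and> j \<in> {1..n} \<and> P i j} = (\<Sum>t\<in>{1..n}. card {j \<in> {1..n}. P (inv u t) j})"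
  using card_pairs_fst[of "{1..n}" P] sum_inv_reindex by simp

lemma pairs_usnd: "card {(i,j). i \<in> {1..n} \<and> j \<in> {1..n} \<and> P i j} = (\<Sum>t\<in>{1..n}. card {i \<in> {1..n}. P i (inv u t)})"
  using card_pairs_snd[of "{1..n}" P] sum_inv_reindex by simp

lemma cros_sum: "cros n u = (\<Sum>t\<in>{1..n}. tg n u t)"
proof -
  let ?CA = "{(i,j). i \<in> {1..n} \<and> j \<in> {1..n} \<and> (i < j \<and> j \<le> u i \<and> u i < u j)}"
  let ?CB = "{(i,j). i \<in> {1..n} \<and> j \<in> {1..n} \<and> (u i < u j \<and> u j < i \<and> i < j)}"
  have eq: "{(i, j). i \<in> {1..n} \<and> j \<in> {1..n} \<and>
      ((i < j \<and> j \<le> u i \<and> u i < u j) \<or> (u i < u j \<and> u j < i \<and> i < j))} = ?CA \<union> ?CB" by auto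
  have fin: "finite ?CA" "finite ?CB"
    by (rule finite_subset[of _ "{1..n} \<times> {1..n}"], auto)+
  have dj: "?CA \<inter> ?CB = {}" by auto
  have "card ?CA = (\<Sum>t\<in>{1..n}. tuc n u t)"
    unfolding pairs_ufst[of "\<lambda>i j. i < j \<and> j \<le> u i \<and> u i < u j"] by (simp add: tuc_def ui_inv)
  moreover have "card ?CB = (\<Sum>t\<in>{1..n}. tlc n u t)"
    unfolding pairs_usnd[of "\<lambda>i j. u i < u j \<and> u j < i \<and> i < j"] by (simp add: tlc_def ui_inv)
  ultimately show ?thesis unfolding cros_def eq using fin dj
    by (simp add: card_Un_disjoint tg_def sum.distrib)
qed

lemma nest_sum: "nest n u = (\<Sum>t\<in>{1..n}. tq n u t)"
proof -
  let ?CA = "{(i,j). i \<in> {1..n} \<and> j \<in> {1..n} \<and> (i < j \<and> j \<le> u j \<and> u j < u i)}"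
  let ?CB = "{(i,j). i \<in> {1..n} \<and> j \<in> {1..n} \<and> (u j < u i \<and> u i < i \<and> i < j)}"
  have eq: "{(i, j). i \<in> {1..n} \<and> j \<in> {1..n} \<and>
      ((i < j \<and> j \<le> u j \<and> u j < u i) \<or> (u j < u i \<and> u i < i \<and> i < j))} = ?CA \<union> ?CB" by auto
  have fin: "finite ?CA" "finite ?CB"
    by (rule finite_subset[of _ "{1..n} \<times> {1..n}"], auto)+
  have dj: "?CA \<inter> ?CB = {}" by auto
  have "card ?CA = (\<Sum>t\<in>{1..n}. tun n u t)"
    unfolding pairs_usnd[of "\<lambda>i j. i < j \<and> j \<le> u j \<and> u j < u i"] by (simp add: tun_def ui_inv)
  moreover have "card ?CB = (\<Sum>t\<in>{1..n}. tln n u t)"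
    unfolding pairs_ufst[of "\<lambda>i j. u j < u i \<and> u i < i \<and> i < j"] by (simp add: tln_def ui_inv conj_commute)
  ultimately show ?thesis unfolding nest_def eq using fin dj
    by (simp add: card_Un_disjoint tq_def sum.distrib)
qed


lemma sumH: "(\<Sum>t\<in>{1..n}. tH n u t) = (\<Sum>i\<in>{1..n}. u i - i)"
proof -
  have "(\<Sum>t\<in>{1..n}. tH n u t) = card {(i,t). i \<in> {1..n} \<and> t \<in> {1..n} \<and> i < t \<and> t \<le> u i}"
    using card_pairs_snd[of "{1..n}" "\<lambda>i t. i < t \<and> t \<le> u i"] by (simp add: tH_def)
  also have "\<dots> = (\<Sum>i\<in>{1..n}. card {t \<in> {1..n}. i < t \<and> t \<le> u i})"
    by (rule card_pairs_fst) simp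
  also have "\<dots> = (\<Sum>i\<in>{1..n}. u i - i)"
  proof (rule sum.cong)
    fix i assume i: "i \<in> {1..n}"
    have "{t \<in> {1..n}. i < t \<and> t \<le> u i} = {i<..u i}" using u_in[OF i] i by auto
    then show "card {t \<in> {1..n}. i < t \<and> t \<le> u i} = u i - i" by simp
  qed simp
  finally show ?thesis .
qed

lemma inv_A:
  assumes i: "i \<in> {1..n}" and wi: "i \<le> u i"
  shows "card {j \<in> {1..n}. i < j \<and> u j < u i} = (u i - i) + card {j \<in> {1..n}. j < i \<and> u i < u j}"
proof -
  have fin: "finite {1..n::nat}" by simp
  have ui: "u i \<in> {1..n}" using u_in[OF i] .
  have a: "(\<Sum>j\<in>{1..n}. ind (u j < u i)) = u i - 1" using count_uless[of "u i"] ui by simp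
  have b: "(\<Sum>j\<in>{1..n}. ind (j < i)) = i - 1" using count_less[of i] i by simp
  have pwa: "ind (u j < u i) = ind (j < i \<and> u j < u i) + ind (i < j \<and> u j < u i)" for j
    by (cases "j = i") (auto simp: ind_def)
  have pwb: "ind (j < i) = ind (j < i \<and> u j < u i) + ind (j < i \<and> u i < u j)" for j
  proof -
    have "j < i \<Longrightarrow> u j \<noteq> u i" using u_inj by auto
    then show ?thesis by (auto simp: ind_def)
  qed
  have a2: "(\<Sum>j\<in>{1..n}. ind (u j < u i)) = (\<Sum>j\<in>{1..n}. ind (j < i \<and> u j < u i)) + (\<Sum>j\<in>{1..n}. ind (i < j \<and> u j < u i))"
    by (simp only: pwa sum.distrib)
  have b2: "(\<Sum>j\<in>{1..n}. ind (j < i)) = (\<Sum>j\<in>{1..n}. ind (j < i \<and> u j < u i)) + (\<Sum>j\<in>{1..n}. ind (j < i \<and> u i < u j))"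
    by (simp only: pwb sum.distrib)
  have c1: "card {j \<in> {1..n}. i < j \<and> u j < u i} = (\<Sum>j\<in>{1..n}. ind (i < j \<and> u j < u i))" by (rule card_ind) simp
  have c2: "card {j \<in> {1..n}. j < i \<and> u i < u j} = (\<Sum>j\<in>{1..n}. ind (j < i \<and> u i < u j))" by (rule card_ind) simp
  have "i \<ge> 1" using i by simp
  then show ?thesis using a b a2 b2 c1 c2 wi by linarith
qed

lemma invc_sum: "invc n u = (\<Sum>t\<in>{1..n}. tH n u t) + nest n u"
proof -
  let ?IS = "{(i, j). i \<in> {1..n} \<and> j \<in> {1..n} \<and> i < j \<and> u i > u j}"
  let ?NS = "{(i, j). i \<in> {1..n} \<and> j \<in> {1..n} \<and>
      ((i < j \<and> j \<le> u j \<and> u j < u i) \<or> (u j < u i \<and> u i < i \<and> i < j))}"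
  let ?XS = "{(i, j). i \<in> {1..n} \<and> j \<in> {1..n} \<and> (i < j \<and> i \<le> u i \<and> u j < j \<and> u j < u i)}"
  have eq: "?IS = ?NS \<union> ?XS" by auto
  have fin: "finite ?NS" "finite ?XS"
    by (rule finite_subset[of _ "{1..n} \<times> {1..n}"], auto)+
  have dj: "?NS \<inter> ?XS = {}" by auto
  have I: "invc n u = nest n u + card ?XS"
    unfolding invc_def nest_def eq using fin dj by (simp add: card_Un_disjoint)
  define X where "X i = card {j \<in> {1..n}. i < j \<and> i \<le> u i \<and> u j < j \<and> u j < u i}" for i
  define W where "W i = card {j \<in> {1..n}. i < j \<and> i \<le> u i \<and> j \<le> u j \<and> u j < u i}" for i
  define B where "B i = card {j \<in> {1..n}. j < i \<and> i \<le> u i \<and> u i < u j}" for i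
  have XS: "card ?XS = (\<Sum>i\<in>{1..n}. X i)" unfolding X_def by (rule card_pairs_fst) simp
  have pw: "X i + W i = (u i - i) + B i" if i: "i \<in> {1..n}" for i
  proof (cases "i \<le> u i")
    case True
    have "{j \<in> {1..n}. i < j \<and> u j < u i} = {j \<in> {1..n}. i < j \<and> i \<le> u i \<and> u j < j \<and> u j < u i}
         \<union> {j \<in> {1..n}. i < j \<and> i \<le> u i \<and> j \<le> u j \<and> u j < u i}" using True by auto
    moreover have "{j \<in> {1..n}. i < j \<and> i \<le> u i \<and> u j < j \<and> u j < u i}
         \<inter> {j \<in> {1..n}. i < j \<and> i \<le> u i \<and> j \<le> u j \<and> u j < u i} = {}" by auto
    ultimately have "card {j \<in> {1..n}. i < j \<and> u j < u i} = X i + W i"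
      unfolding X_def W_def by (simp add: card_Un_disjoint)
    moreover have "B i = card {j \<in> {1..n}. j < i \<and> u i < u j}" unfolding B_def using True by simp
    ultimately show ?thesis using inv_A[OF i True] by simp
  next
    case False
    then show ?thesis by (simp add: X_def W_def B_def)
  qed
  have BW: "(\<Sum>i\<in>{1..n}. B i) = (\<Sum>i\<in>{1..n}. W i)"
  proof -
    let ?BP = "{(i, j). i \<in> {1..n} \<and> j \<in> {1..n} \<and> j < i \<and> i \<le> u i \<and> u i < u j}"
    let ?WP = "{(i, j). i \<in> {1..n} \<and> j \<in> {1..n} \<and> i < j \<and> i \<le> u i \<and> j \<le> u j \<and> u j < u i}"
    have b: "card ?BP = (\<Sum>i\<in>{1..n}. B i)" unfolding B_def by (rule card_pairs_fst) simp
    have w: "card ?WP = (\<Sum>i\<in>{1..n}. W i)" unfolding W_def by (rule card_pairs_fst) simp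
    have "?BP = (\<lambda>(i,j). (j,i)) ` ?WP" by auto
    moreover have "inj_on (\<lambda>(i,j). (j,i)) ?WP" by (auto simp: inj_on_def)
    ultimately have "card ?BP = card ?WP" by (simp add: card_image)
    then show ?thesis using b w by simp
  qed
  have "(\<Sum>i\<in>{1..n}. X i) + (\<Sum>i\<in>{1..n}. W i) = (\<Sum>i\<in>{1..n}. u i - i) + (\<Sum>i\<in>{1..n}. B i)"
    using pw by (simp add: sum.distrib[symmetric])
  then have "(\<Sum>i\<in>{1..n}. X i) = (\<Sum>i\<in>{1..n}. u i - i)" using BW by simp
  then show ?thesis using I XS sumH by simp
qed

lemma fix_iff:
  assumes t: "t \<in> {1..n}"
  shows "(tty u t = 2 \<and> tg n u t = 0) \<longleftrightarrow> u t = t"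
proof
  assume a: "tty u t = 2 \<and> tg n u t = 0"
  show "u t = t"
  proof (rule ccontr)
    assume ne: "u t \<noteq> t"
    have r: "inv u t \<noteq> t" using ne u_eq_iff by metis
    have "\<not> u t < t" "inv u t \<le> t" using a by (auto simp: tty_def split: if_splits)
    then have gt: "t < u t" "inv u t < t" using ne r by auto
    have "t \<in> {j \<in> {1..n}. inv u t < j \<and> j \<le> t \<and> t < u j}" using t gt by auto
    moreover have "finite {j \<in> {1..n}. inv u t < j \<and> j \<le> t \<and> t < u j}" by simp
    ultimately have "tuc n u t \<noteq> 0" unfolding tuc_def using card_0_eq by blast
    then show False using a by (simp add: tg_def)
  qed
next
  assume "u t = t"
  then have "inv u t = t" using u_eq_iff by metis
  then show "tty u t = 2 \<and> tg n u t = 0" using \<open>u t = t\<close> by (simp add: tty_def tg_def tuc_def tlc_def)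
qed

lemma thist_HT: "HT (thist n u) = (wex n u, fixcount n u, cros n u, nest n u, invc n u)"
proof -
  have fin: "finite {1..n::nat}" by simp
  have D: "hD (thist n u) = (\<Sum>t\<in>{1..n}. ind (u t < t))"
  proof -
    have "hD (thist n u) = (\<Sum>i<n. ind (u (Suc i) < Suc i))"
      unfolding hD_def thist_len by (rule sum.cong) (auto simp: thist_nth tty_def ind_def)
    then show ?thesis by (simp add: sum.atLeast1_atMost_eq)
  qed
  have W: "wex n u = n - hD (thist n u)"
  proof -
    have "wex n u = (\<Sum>t\<in>{1..n}. ind (t \<le> u t))" unfolding wex_def by (rule card_ind) simp
    moreover have "(\<Sum>t\<in>{1..n}. ind (t \<le> u t)) + (\<Sum>t\<in>{1..n}. ind (u t < t)) = n"
    proof -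
      have "\<And>t. ind (t \<le> u t) + ind (u t < t) = 1" by (simp add: ind_def)
      then show ?thesis by (simp add: sum.distrib[symmetric])
    qed
    ultimately show ?thesis using D by simp
  qed
  have F: "hF (thist n u) = fixcount n u"
  proof -
    have "hF (thist n u) = (\<Sum>i<n. ind (u (Suc i) = Suc i))"
      unfolding hF_def thist_len
    proof (rule sum.cong)
      fix i assume "i \<in> {..<n}"
      then have i: "i < n" "Suc i \<in> {1..n}" by auto
      show "(if fst (thist n u ! i) = 2 \<and> snd (thist n u ! i) = 0 then 1 else 0) = ind (u (Suc i) = Suc i)"
        using fix_iff[OF i(2)] by (simp add: thist_nth[OF i(1)] ind_def)
    qed simp
    also have "\<dots> = (\<Sum>t\<in>{1..n}. ind (u t = t))" by (simp add: sum.atLeast1_atMost_eq)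
    also have "\<dots> = fixcount n u" unfolding fixcount_def by (rule card_ind[symmetric]) simp
    finally show ?thesis .
  qed
  have G: "hG (thist n u) = cros n u"
  proof -
    have "hG (thist n u) = (\<Sum>i<n. tg n u (Suc i))"
      unfolding hG_def thist_len by (rule sum.cong) (auto simp: thist_nth)
    then show ?thesis by (simp add: sum.atLeast1_atMost_eq cros_sum)
  qed
  have Q: "hQ (thist n u) = nest n u"
  proof -
    have "hQ (thist n u) = (\<Sum>i<n. tq n u (Suc i))"
      unfolding hQ_def thist_len
    proof (rule sum.cong)
      fix i assume "i \<in> {..<n}"
      then have i: "i < n" "Suc i \<in> {1..n}" by auto
      show "the (runh 0 (take i (thist n u))) - snd (thist n u ! i) - (if fst (thist n u ! i) < 2 then 1 else 0)
            = tq n u (Suc i)"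
        using thist_take[of i] i tH_split[OF i(2)] by (simp add: thist_nth tty_def ind_def)
    qed simp
    then show ?thesis by (simp add: sum.atLeast1_atMost_eq nest_sum)
  qed
  have Hs: "(\<Sum>t\<in>{1..n}. tH n u t) = hD (thist n u) + hG (thist n u) + hQ (thist n u)"
  proof -
    have "(\<Sum>t\<in>{1..n}. tH n u t) = (\<Sum>t\<in>{1..n}. tg n u t + tq n u t + ind (u t < t))"
      by (rule sum.cong) (simp_all add: tH_split)
    then show ?thesis using D G Q by (simp add: sum.distrib cros_sum nest_sum)
  qed
  show ?thesis using W F G Q Hs invc_sum by (simp add: HT_def thist_len)
qed

end


definition tU :: "nat \<Rightarrow> (nat \<Rightarrow> nat) \<Rightarrow> nat \<Rightarrow> nat set" where
  "tU n u t = {i \<in> {1..n}. i \<le> t \<and> t < u i}"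
definition tV :: "nat \<Rightarrow> (nat \<Rightarrow> nat) \<Rightarrow> nat \<Rightarrow> nat set" where
  "tV n u t = {a \<in> {1..n}. a \<le> t \<and> t < inv u a}"
definition tO :: "nat \<Rightarrow> (nat \<Rightarrow> nat) \<Rightarrow> nat \<Rightarrow> (nat \<times> nat) set" where
  "tO n u t = {(a, b). a \<in> tV n u t \<and> b \<in> tV n u t \<and> inv u a < inv u b}"
definition tCl :: "nat \<Rightarrow> (nat \<Rightarrow> nat) \<Rightarrow> nat \<Rightarrow> (nat \<times> nat) set" where
  "tCl n u t = {(i, j). i \<in> {1..n} \<and> i \<le> t \<and> j \<le> t \<and> u i = j}"

lemma cnt_unique:
  fixes U :: "nat set"
  assumes fin: "finite U" and a: "i1 \<in> U" "i2 \<in> U"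
    and c: "card {j \<in> U. i1 < j} = card {j \<in> U. i2 < j}"
  shows "i1 = i2"
proof (rule ccontr)
  assume ne: "i1 \<noteq> i2"
  have lt: "card {j \<in> U. y < j} < card {j \<in> U. x < j}" if "x \<in> U" "y \<in> U" "x < y" for x y
  proof (rule psubset_card_mono)
    show "finite {j \<in> U. x < j}" using fin by simp
    have sub: "{j \<in> U. y < j} \<subseteq> {j \<in> U. x < j}" using that by auto
    have "y \<in> {j \<in> U. x < j}" "y \<notin> {j \<in> U. y < j}" using that by auto
    then show "{j \<in> U. y < j} \<subset> {j \<in> U. x < j}" using sub by blast
  qed
  show False
  proof (cases "i1 < i2")
    case True then show False using lt[OF a True] c by simp
  next
    case False then have "i2 < i1" using ne by simp
    then show False using lt[OF a(2) a(1)] c by simp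
  qed
qed

context
  fixes n :: nat and u :: "nat \<Rightarrow> nat"
  assumes up: "u permutes {1..n}"
begin

lemma tO_total: "a \<in> tV n u t \<Longrightarrow> b \<in> tV n u t \<Longrightarrow> a \<noteq> b \<Longrightarrow> (a, b) \<in> tO n u t \<or> (b, a) \<in> tO n u t"
proof -
  assume a: "a \<in> tV n u t" and b: "b \<in> tV n u t" and ne: "a \<noteq> b"
  have "inv u a \<noteq> inv u b" using ne ui_inv[OF up] by metis
  then show ?thesis using a b by (auto simp: tO_def)
qed

lemma cond_iff:
  assumes s: "s \<in> {1..n}"
  shows "(inv u s < s \<longleftrightarrow> tty u s = 0 \<or> (tty u s = 2 \<and> tg n u s \<noteq> 0))"
    and "(inv u s = s \<longleftrightarrow> tty u s = 2 \<and> tg n u s = 0)"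
    and "(u s < s \<longleftrightarrow> tty u s < 2)"
    and "(u s = s \<longleftrightarrow> tty u s = 2 \<and> tg n u s = 0)"
proof -
  have f: "(tty u s = 2 \<and> tg n u s = 0) \<longleftrightarrow> u s = s" by (rule fix_iff[OF up s])
  have e: "u s = s \<longleftrightarrow> inv u s = s" using u_eq_iff[OF up] by metis
  show "(inv u s < s \<longleftrightarrow> tty u s = 0 \<or> (tty u s = 2 \<and> tg n u s \<noteq> 0))"
    using f e by (auto simp: tty_def split: if_splits)
  show "(inv u s = s \<longleftrightarrow> tty u s = 2 \<and> tg n u s = 0)" using f e by simp
  show "(u s < s \<longleftrightarrow> tty u s < 2)" by (auto simp: tty_def)
  show "(u s = s \<longleftrightarrow> tty u s = 2 \<and> tg n u s = 0)" using f by simp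
qed

lemma L1: "tU n u (Suc t) = {i \<in> tU n u t. u i \<noteq> Suc t} \<union> {i. i = Suc t \<and> Suc t < u (Suc t) \<and> Suc t \<le> n}"
  by (auto simp: tU_def le_Suc_eq)

lemma L2: "t < n \<Longrightarrow> tV n u (Suc t) = {a \<in> tV n u t. a \<noteq> u (Suc t)} \<union> {a. a = Suc t \<and> Suc t < inv u (Suc t)}"
proof -
  assume t: "t < n"
  have "a \<in> tV n u (Suc t) \<longleftrightarrow> a \<in> {a \<in> tV n u t. a \<noteq> u (Suc t)} \<union> {a. a = Suc t \<and> Suc t < inv u (Suc t)}" for a
  proof -
    have "a = u (Suc t) \<longleftrightarrow> inv u a = Suc t" using u_eq_iff[OF up] by metis
    then show ?thesis using t by (auto simp: tV_def le_Suc_eq)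
  qed
  then show ?thesis by blast
qed

lemma L3: "t < n \<Longrightarrow> tCl n u (Suc t) = tCl n u t \<union> {p. p = (inv u (Suc t), Suc t) \<and> inv u (Suc t) \<le> Suc t}
   \<union> {p. p = (Suc t, u (Suc t)) \<and> u (Suc t) \<le> Suc t}"
proof -
  assume t: "t < n"
  have s: "Suc t \<in> {1..n}" using t by simp
  have r: "inv u (Suc t) \<in> {1..n}" "u (inv u (Suc t)) = Suc t" using uinv_in[OF up s] ui_inv[OF up] by auto
  show ?thesis
  proof (rule set_eqI)
    fix p
    obtain i j :: nat where p: "p = (i, j)" by fastforce
    have "u i = Suc t \<longleftrightarrow> i = inv u (Suc t)" using u_eq_iff[OF up] by metis
    then show "p \<in> tCl n u (Suc t) \<longleftrightarrow> p \<in> tCl n u t \<union> {p. p = (inv u (Suc t), Suc t) \<and> inv u (Suc t) \<le> Suc t}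
       \<union> {p. p = (Suc t, u (Suc t)) \<and> u (Suc t) \<le> Suc t}"
      using p r s by (auto simp: tCl_def le_Suc_eq)
  qed
qed

lemma L5:
  assumes t: "t < n" and r: "inv u (Suc t) < Suc t"
  shows "inv u (Suc t) \<in> tU n u t \<and> tg n u (Suc t) = card {j \<in> tU n u t. inv u (Suc t) < j} + ind (Suc t < u (Suc t))"
proof -
  let ?s = "Suc t" and ?r = "inv u (Suc t)"
  have s: "?s \<in> {1..n}" using t by simp
  have rr: "?r \<in> {1..n}" "u ?r = ?s" using uinv_in[OF up s] ui_inv[OF up] by auto
  have ueq: "\<And>i. u i = ?s \<longleftrightarrow> i = ?r" using u_eq_iff[OF up] by metis
  have inU: "?r \<in> tU n u t" using rr r by (auto simp: tU_def)
  have lc: "tlc n u ?s = 0" using r by (simp add: tlc_def)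
  have eq: "{j \<in> {1..n}. ?r < j \<and> j \<le> ?s \<and> ?s < u j} = {j \<in> tU n u t. ?r < j} \<union> {j. j = ?s \<and> ?s < u ?s}"
  proof (rule set_eqI)
    fix j
    show "j \<in> {j \<in> {1..n}. ?r < j \<and> j \<le> ?s \<and> ?s < u j} \<longleftrightarrow> j \<in> {j \<in> tU n u t. ?r < j} \<union> {j. j = ?s \<and> ?s < u ?s}"
      using ueq[of j] s r by (auto simp: tU_def le_Suc_eq)
  qed
  have "tuc n u ?s = card {j \<in> tU n u t. ?r < j} + ind (?s < u ?s)"
  proof -
    have fin: "finite {j \<in> tU n u t. ?r < j}" by (simp add: tU_def)
    have "?s \<notin> tU n u t" by (simp add: tU_def)
    then have c: "card ({j \<in> tU n u t. ?r < j} \<union> {j. j = ?s \<and> ?s < u ?s}) = card {j \<in> tU n u t. ?r < j} + ind (?s < u ?s)"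
      using fin by (cases "?s < u ?s") (auto simp: ind_def)
    show ?thesis by (simp only: tuc_def eq c)
  qed
  then show ?thesis using inU lc by (simp add: tg_def)
qed

lemma L6: "Suc t \<le> inv u (Suc t) \<Longrightarrow> {i \<in> tU n u t. u i \<noteq> Suc t} = tU n u t"
proof -
  assume a: "Suc t \<le> inv u (Suc t)"
  have "u i \<noteq> Suc t" if "i \<in> tU n u t" for i
  proof
    assume "u i = Suc t"
    then have "i = inv u (Suc t)" using u_eq_iff[OF up] by metis
    then show False using that a by (simp add: tU_def)
  qed
  then show ?thesis by blast
qed

lemma L7:
  assumes t: "t < n" and v: "u (Suc t) < Suc t"
  shows "u (Suc t) \<in> tV n u t \<and> (\<forall>b\<in>tV n u t. (b, u (Suc t)) \<notin> tO n u t)"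
proof -
  have s: "Suc t \<in> {1..n}" using t by simp
  have vin: "u (Suc t) \<in> {1..n}" using u_in[OF up s] .
  have iv: "inv u (u (Suc t)) = Suc t" using inv_ui[OF up] .
  have inV: "u (Suc t) \<in> tV n u t" using vin v iv by (auto simp: tV_def)
  have "(b, u (Suc t)) \<notin> tO n u t" if "b \<in> tV n u t" for b
  proof
    assume "(b, u (Suc t)) \<in> tO n u t"
    then have "inv u b < Suc t" "t < inv u b" using iv that by (auto simp: tO_def tV_def)
    then show False by simp
  qed
  then show ?thesis using inV by blast
qed

lemma L8: "Suc t \<le> u (Suc t) \<Longrightarrow> {a \<in> tV n u t. a \<noteq> u (Suc t)} = tV n u t"
  by (auto simp: tV_def)

lemma L9:
  assumes t: "t < n" and r: "Suc t < inv u (Suc t)"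
  shows "tg n u (Suc t) = card {b \<in> tV n u t. b \<noteq> u (Suc t) \<and> inv u b < inv u (Suc t)}"
proof -
  let ?s = "Suc t" and ?r = "inv u (Suc t)"
  have s: "?s \<in> {1..n}" using t by simp
  have uc: "tuc n u ?s = 0" using r by (simp add: tuc_def)
  have inj: "inj u" using up permutes_inj by blast
  have "u ` {i \<in> {1..n}. u i < ?s \<and> ?s < i \<and> i < ?r} = {b \<in> tV n u t. b \<noteq> u ?s \<and> inv u b < ?r}"
  proof (rule set_eqI, rule iffI)
    fix b assume "b \<in> u ` {i \<in> {1..n}. u i < ?s \<and> ?s < i \<and> i < ?r}"
    then obtain i where i: "b = u i" "i \<in> {1..n}" "u i < ?s" "?s < i" "i < ?r" by auto
    have "u i \<noteq> u ?s" using i(4) u_inj[OF up] by simp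
    then show "b \<in> {b \<in> tV n u t. b \<noteq> u ?s \<and> inv u b < ?r}"
      using i u_in[OF up i(2)] inv_ui[OF up] by (auto simp: tV_def)
  next
    fix b assume b: "b \<in> {b \<in> tV n u t. b \<noteq> u ?s \<and> inv u b < ?r}"
    let ?i = "inv u b"
    have bi: "?i \<in> {1..n}" "u ?i = b" using b uinv_in[OF up] ui_inv[OF up] by (auto simp: tV_def)
    have "?i \<noteq> ?s" using b bi(2) by auto
    then have "?s < ?i" using b by (auto simp: tV_def)
    then show "b \<in> u ` {i \<in> {1..n}. u i < ?s \<and> ?s < i \<and> i < ?r}"
      using b bi by (auto simp: tV_def intro!: image_eqI[of _ _ ?i])
  qed
  moreover have "card (u ` {i \<in> {1..n}. u i < ?s \<and> ?s < i \<and> i < ?r}) = card {i \<in> {1..n}. u i < ?s \<and> ?s < i \<and> i < ?r}"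
    by (rule card_image) (rule inj_on_subset[OF inj subset_UNIV])
  ultimately show ?thesis using uc by (simp add: tg_def tlc_def)
qed

lemma L9b:
  assumes t: "t < n" and r: "Suc t < inv u (Suc t)" and a: "a \<in> tV n u t" "a \<noteq> u (Suc t)"
  shows "inv u a < inv u (Suc t) \<longleftrightarrow> card {b \<in> tV n u t. b \<noteq> u (Suc t) \<and> (b, a) \<in> tO n u t} < tg n u (Suc t)"
proof -
  let ?V = "{b \<in> tV n u t. b \<noteq> u (Suc t)}"
  have g: "tg n u (Suc t) = card {b \<in> ?V. inv u b < inv u (Suc t)}" using L9[OF t r] by simp
  have rk: "{b \<in> tV n u t. b \<noteq> u (Suc t) \<and> (b, a) \<in> tO n u t} = {b \<in> ?V. inv u b < inv u a}"
    using a by (auto simp: tO_def)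
  have ne: "inv u a \<noteq> inv u (Suc t)"
  proof
    assume "inv u a = inv u (Suc t)"
    then have "a = Suc t" by (metis ui_inv[OF up])
    then show False using a by (simp add: tV_def)
  qed
  have fin: "finite ?V" by (simp add: tV_def)
  show ?thesis unfolding rk g
  proof
    assume lt: "inv u a < inv u (Suc t)"
    have sub: "{b \<in> ?V. inv u b < inv u a} \<subseteq> {b \<in> ?V. inv u b < inv u (Suc t)}" using lt by auto
    have "a \<in> {b \<in> ?V. inv u b < inv u (Suc t)}" "a \<notin> {b \<in> ?V. inv u b < inv u a}" using lt a by auto
    then have ps: "{b \<in> ?V. inv u b < inv u a} \<subset> {b \<in> ?V. inv u b < inv u (Suc t)}" using sub by blast
    have f2: "finite {b \<in> ?V. inv u b < inv u (Suc t)}" by (simp add: tV_def)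
    show "card {b \<in> ?V. inv u b < inv u a} < card {b \<in> ?V. inv u b < inv u (Suc t)}"
      by (rule psubset_card_mono[OF f2 ps])
  next
    assume lt: "card {b \<in> ?V. inv u b < inv u a} < card {b \<in> ?V. inv u b < inv u (Suc t)}"
    show "inv u a < inv u (Suc t)"
    proof (rule ccontr)
      assume "\<not> inv u a < inv u (Suc t)"
      then have "inv u (Suc t) < inv u a" using ne by simp
      then have "{b \<in> ?V. inv u b < inv u (Suc t)} \<subseteq> {b \<in> ?V. inv u b < inv u a}" by auto
      moreover have "finite {b \<in> ?V. inv u b < inv u a}" by (simp add: tV_def)
      ultimately have "card {b \<in> ?V. inv u b < inv u (Suc t)} \<le> card {b \<in> ?V. inv u b < inv u a}"
        by (simp add: card_mono)
      then show False using lt by simp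
    qed
  qed
qed

lemma Cl_end: "tCl n u n = {(i, j). i \<in> {1..n} \<and> u i = j}"
  using u_in[OF up] by (auto simp: tCl_def)


lemma VSminus: "t < n \<Longrightarrow> tV n u (Suc t) - {Suc t} = {a \<in> tV n u t. a \<noteq> u (Suc t)}"
  using L2[of t] by (auto simp: tV_def)

lemma VS_s: "Suc t \<in> tV n u (Suc t) \<Longrightarrow> Suc t < inv u (Suc t)"
  by (simp add: tV_def)

lemma Orank:
  assumes t: "t < n" and sV: "Suc t \<in> tV n u (Suc t)" and a: "a \<in> tV n u (Suc t) - {Suc t}"
  shows "inv u a < inv u (Suc t) \<longleftrightarrow> card {b \<in> tV n u (Suc t) - {Suc t}. (b, a) \<in> tO n u t} < tg n u (Suc t)"
proof -
  have a2: "a \<in> tV n u t" "a \<noteq> u (Suc t)" using a VSminus[OF t] by auto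
  have "{b \<in> tV n u (Suc t) - {Suc t}. (b, a) \<in> tO n u t} = {b \<in> tV n u t. b \<noteq> u (Suc t) \<and> (b, a) \<in> tO n u t}"
    using VSminus[OF t] by auto
  then show ?thesis using L9b[OF t VS_s[OF sV] a2] by simp
qed

lemma Oold:
  assumes t: "t < n" and a: "a \<in> tV n u (Suc t) - {Suc t}" and b: "b \<in> tV n u (Suc t) - {Suc t}"
  shows "inv u a < inv u b \<longleftrightarrow> (a, b) \<in> tO n u t"
  using a b VSminus[OF t] by (auto simp: tO_def)

lemma inv_ne: "a \<noteq> b \<Longrightarrow> inv u a \<noteq> inv u b"
  by (metis ui_inv[OF up])

end

lemma state_step:
  assumes u1: "u1 permutes {1..n}" and u2: "u2 permutes {1..n}" and t: "t < n"
    and eU: "tU n u1 t = tU n u2 t" and eV: "tV n u1 t = tV n u2 t"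
    and eO: "tO n u1 t = tO n u2 t" and eC: "tCl n u1 t = tCl n u2 t"
    and ety: "tty u1 (Suc t) = tty u2 (Suc t)" and eg: "tg n u1 (Suc t) = tg n u2 (Suc t)"
  shows "tU n u1 (Suc t) = tU n u2 (Suc t) \<and> tV n u1 (Suc t) = tV n u2 (Suc t)
     \<and> tO n u1 (Suc t) = tO n u2 (Suc t) \<and> tCl n u1 (Suc t) = tCl n u2 (Suc t)"
proof -
  let ?s = "Suc t"
  have s: "?s \<in> {1..n}" using t by simp
  note c1 = cond_iff[OF u1 s] and c2 = cond_iff[OF u2 s]
  have K1: "inv u1 ?s < ?s \<longleftrightarrow> inv u2 ?s < ?s" using c1(1) c2(1) ety eg by simp
  have K2: "inv u1 ?s = ?s \<longleftrightarrow> inv u2 ?s = ?s" using c1(2) c2(2) ety eg by simp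
  have K3: "u1 ?s < ?s \<longleftrightarrow> u2 ?s < ?s" using c1(3) c2(3) ety by simp
  have K4: "u1 ?s = ?s \<longleftrightarrow> u2 ?s = ?s" using c1(4) c2(4) ety eg by simp
  have K2': "?s < inv u1 ?s \<longleftrightarrow> ?s < inv u2 ?s"
  proof -
    have "?s < inv u1 ?s \<longleftrightarrow> \<not> inv u1 ?s < ?s \<and> inv u1 ?s \<noteq> ?s" by auto
    moreover have "?s < inv u2 ?s \<longleftrightarrow> \<not> inv u2 ?s < ?s \<and> inv u2 ?s \<noteq> ?s" by auto
    ultimately show ?thesis using K1 K2 by simp
  qed
  have K4': "?s < u1 ?s \<longleftrightarrow> ?s < u2 ?s"
  proof -
    have "?s < u1 ?s \<longleftrightarrow> \<not> u1 ?s < ?s \<and> u1 ?s \<noteq> ?s" by auto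
    moreover have "?s < u2 ?s \<longleftrightarrow> \<not> u2 ?s < ?s \<and> u2 ?s \<noteq> ?s" by auto
    ultimately show ?thesis using K3 K4 by simp
  qed
  have R: "inv u1 ?s = inv u2 ?s" if a: "inv u1 ?s < ?s"
  proof -
    have b: "inv u2 ?s < ?s" using a K1 by simp
    have l1: "inv u1 ?s \<in> tU n u1 t \<and> tg n u1 ?s = card {j \<in> tU n u1 t. inv u1 ?s < j} + ind (?s < u1 ?s)"
      by (rule L5[OF u1 t a])
    have l2: "inv u2 ?s \<in> tU n u2 t \<and> tg n u2 ?s = card {j \<in> tU n u2 t. inv u2 ?s < j} + ind (?s < u2 ?s)"
      by (rule L5[OF u2 t b])
    have "card {j \<in> tU n u1 t. inv u1 ?s < j} = card {j \<in> tU n u1 t. inv u2 ?s < j}"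
      using l1 l2 eg K4' eU by (simp add: ind_def)
    moreover have "finite (tU n u1 t)" by (simp add: tU_def)
    ultimately show ?thesis using cnt_unique l1 l2 eU by metis
  qed
  have Vv: "u1 ?s = u2 ?s" if a: "u1 ?s < ?s"
  proof (rule ccontr)
    assume ne: "u1 ?s \<noteq> u2 ?s"
    have b: "u2 ?s < ?s" using a K3 by simp
    have l1: "u1 ?s \<in> tV n u1 t \<and> (\<forall>b\<in>tV n u1 t. (b, u1 ?s) \<notin> tO n u1 t)" by (rule L7[OF u1 t a])
    have l2: "u2 ?s \<in> tV n u2 t \<and> (\<forall>b\<in>tV n u2 t. (b, u2 ?s) \<notin> tO n u2 t)" by (rule L7[OF u2 t b])
    have "(u1 ?s, u2 ?s) \<in> tO n u1 t \<or> (u2 ?s, u1 ?s) \<in> tO n u1 t"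
      using tO_total[OF u1] l1 l2 eV ne by metis
    then show False using l1 l2 eV eO by auto
  qed
  have eA: "{p. p = (inv u1 ?s, ?s) \<and> inv u1 ?s \<le> ?s} = {p. p = (inv u2 ?s, ?s) \<and> inv u2 ?s \<le> ?s}"
  proof (cases "inv u1 ?s < ?s")
    case True then show ?thesis using R K1 by simp
  next
    case False
    show ?thesis
    proof (cases "inv u1 ?s = ?s")
      case True then show ?thesis using K2 by simp
    next
      case False
      then have "?s < inv u1 ?s" "?s < inv u2 ?s" using \<open>\<not> inv u1 ?s < ?s\<close> K2' by auto
      then show ?thesis by auto
    qed
  qed
  have eB: "{p. p = (?s, u1 ?s) \<and> u1 ?s \<le> ?s} = {p. p = (?s, u2 ?s) \<and> u2 ?s \<le> ?s}"
  proof (cases "u1 ?s < ?s")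
    case True then show ?thesis using Vv K3 by simp
  next
    case False
    show ?thesis
    proof (cases "u1 ?s = ?s")
      case True then show ?thesis using K4 by simp
    next
      case False
      then have "?s < u1 ?s" "?s < u2 ?s" using \<open>\<not> u1 ?s < ?s\<close> K4' by auto
      then show ?thesis by auto
    qed
  qed
  have C: "tCl n u1 ?s = tCl n u2 ?s" using L3[OF u1 t] L3[OF u2 t] eC eA eB by simp
  have eU1: "{i \<in> tU n u1 t. u1 i \<noteq> ?s} = {i \<in> tU n u2 t. u2 i \<noteq> ?s}"
  proof (cases "inv u1 ?s < ?s")
    case True
    have "\<And>i. u1 i \<noteq> ?s \<longleftrightarrow> i \<noteq> inv u1 ?s" using u_eq_iff[OF u1] by metis
    moreover have "\<And>i. u2 i \<noteq> ?s \<longleftrightarrow> i \<noteq> inv u2 ?s" using u_eq_iff[OF u2] by metis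
    ultimately show ?thesis using R[OF True] eU by simp
  next
    case False
    then have x: "?s \<le> inv u1 ?s" "?s \<le> inv u2 ?s" using K1 by auto
    have a: "{i \<in> tU n u1 t. u1 i \<noteq> ?s} = tU n u1 t" by (rule L6[OF u1 x(1)])
    have b: "{i \<in> tU n u2 t. u2 i \<noteq> ?s} = tU n u2 t" by (rule L6[OF u2 x(2)])
    show ?thesis unfolding a b by (rule eU)
  qed
  have U: "tU n u1 ?s = tU n u2 ?s" using L1[OF u1] L1[OF u2] eU1 K4' by simp
  have eV1: "{a \<in> tV n u1 t. a \<noteq> u1 ?s} = {a \<in> tV n u2 t. a \<noteq> u2 ?s}"
  proof (cases "u1 ?s < ?s")
    case True then show ?thesis using Vv eV by simp
  next
    case False
    then have x: "?s \<le> u1 ?s" "?s \<le> u2 ?s" using K3 by auto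
    have a: "{a \<in> tV n u1 t. a \<noteq> u1 ?s} = tV n u1 t" by (rule L8[OF u1 x(1)])
    have b: "{a \<in> tV n u2 t. a \<noteq> u2 ?s} = tV n u2 t" by (rule L8[OF u2 x(2)])
    show ?thesis unfolding a b by (rule eV)
  qed
  have V: "tV n u1 ?s = tV n u2 ?s" using L2[OF u1 t] L2[OF u2 t] eV1 K2' by simp
  have O: "tO n u1 ?s = tO n u2 ?s"
  proof (rule set_eqI)
    fix p
    obtain a b :: nat where p: "p = (a, b)" by fastforce
    have key: "inv u1 a < inv u1 b \<longleftrightarrow> inv u2 a < inv u2 b"
      if a: "a \<in> tV n u1 ?s" and b: "b \<in> tV n u1 ?s" for a b
    proof -
      have a2: "a \<in> tV n u2 ?s" and b2: "b \<in> tV n u2 ?s" using a b V by auto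
      have rank: "inv u1 x < inv u1 ?s \<longleftrightarrow> inv u2 x < inv u2 ?s"
        if sV: "?s \<in> tV n u1 ?s" and x: "x \<in> tV n u1 ?s - {?s}" for x
      proof -
        have sV2: "?s \<in> tV n u2 ?s" using sV V by simp
        have x2: "x \<in> tV n u2 ?s - {?s}" using x V by simp
        show ?thesis using Orank[OF u1 t sV x] Orank[OF u2 t sV2 x2] V eO eg by simp
      qed
      consider "a \<noteq> ?s" "b \<noteq> ?s" | "a = ?s" "b = ?s" | "a \<noteq> ?s" "b = ?s" | "a = ?s" "b \<noteq> ?s" by blast
      then show ?thesis
      proof cases
        case 1
        then show ?thesis using Oold[OF u1 t, of a b] Oold[OF u2 t, of a b] a b a2 b2 eO by simp
      next
        case 2 then show ?thesis by simp
      next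
        case 3 then show ?thesis using rank[of a] a b by simp
      next
        case 4
        have "inv u1 a \<noteq> inv u1 b" "inv u2 a \<noteq> inv u2 b" using inv_ne[OF u1] inv_ne[OF u2] 4 by auto
        then have "inv u1 a < inv u1 b \<longleftrightarrow> \<not> inv u1 b < inv u1 a" "inv u2 a < inv u2 b \<longleftrightarrow> \<not> inv u2 b < inv u2 a"
          by auto
        then show ?thesis using rank[of b] a b 4 by simp
      qed
    qed
    show "p \<in> tO n u1 ?s \<longleftrightarrow> p \<in> tO n u2 ?s" using key V p by (auto simp: tO_def)
  qed
  show ?thesis using U V O C by simp
qed

lemma thist_inj:
  assumes u1: "u1 permutes {1..n}" and u2: "u2 permutes {1..n}" and h: "thist n u1 = thist n u2"
  shows "u1 = u2"
proof -
  have e: "tty u1 t = tty u2 t \<and> tg n u1 t = tg n u2 t" if t: "t \<in> {1..n}" for t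
  proof -
    have "t - 1 < n" using t by auto
    then have "thist n u1 ! (t - 1) = thist n u2 ! (t - 1)" using h by simp
    then show ?thesis using thist_nth[OF u1 \<open>t - 1 < n\<close>] thist_nth[OF u2 \<open>t - 1 < n\<close>] t by auto
  qed
  have st: "t \<le> n \<Longrightarrow> tU n u1 t = tU n u2 t \<and> tV n u1 t = tV n u2 t \<and> tO n u1 t = tO n u2 t \<and> tCl n u1 t = tCl n u2 t" for t
  proof (induction t)
    case 0
    have "tU n u1 0 = {}" "tU n u2 0 = {}" "tV n u1 0 = {}" "tV n u2 0 = {}" "tCl n u1 0 = {}" "tCl n u2 0 = {}"
      by (auto simp: tU_def tV_def tCl_def)
    then show ?case by (simp add: tO_def)
  next
    case (Suc t)
    then have t: "t < n" by simp
    have "Suc t \<in> {1..n}" using t by simp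
    then show ?case using state_step[OF u1 u2 t] Suc e by simp
  qed
  have "tCl n u1 n = tCl n u2 n" using st by simp
  then have "{(i, j). i \<in> {1..n} \<and> u1 i = j} = {(i, j). i \<in> {1..n} \<and> u2 i = j}"
    using Cl_end[OF u1] Cl_end[OF u2] by simp
  then have eq: "\<And>i. i \<in> {1..n} \<Longrightarrow> u1 i = u2 i" by blast
  show ?thesis
  proof
    fix i show "u1 i = u2 i"
      using eq[of i] u0[OF u1, of i] u0[OF u2, of i] by (cases "i \<in> {1..n}") auto
  qed
qed



lemma shist_HS: assumes sp: "s permutes {1..n}" shows "shist n s \<in> HS n 0"
proof -
  have "sDN n s (Suc n) = {}"
  proof -
    have "s (k - 1) \<le> n" if "k \<in> {1..n}" for k
    proof (cases "k = 1")
      case True then show ?thesis using s0[OF sp] by simp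
    next
      case False then have "k - 1 \<in> {1..n}" using that by auto
      then show ?thesis using s_in[OF sp] by fastforce
    qed
    then show ?thesis by (fastforce simp: sDN_def)
  qed
  then show ?thesis using shist_take[OF sp, of n] by (simp add: HS_def shist_len[OF sp])
qed

lemma bij_hist:
  assumes inj: "\<And>a b. a \<in> perms n \<Longrightarrow> b \<in> perms n \<Longrightarrow> E a = E b \<Longrightarrow> a = b"
    and into: "\<And>a. a \<in> perms n \<Longrightarrow> E a \<in> HS n 0"
  shows "bij_betw E (perms n) (HS n 0)"
proof -
  have fp: "finite (perms n)" unfolding perms_def by (rule finite_permutations) simp
  have cp: "card (perms n) = fact n" unfolding perms_def by (rule card_permutations) simp_all
  have ch: "card (HS n 0) = fact n" by (simp add: card_HS)
  have i: "inj_on E (perms n)" using inj by (auto simp: inj_on_def)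
  have sub: "E ` perms n \<subseteq> HS n 0" using into by auto
  have "card (E ` perms n) = card (HS n 0)" using card_image[OF i] cp ch by simp
  then have "E ` perms n = HS n 0" using card_subset_eq[OF HS_finite sub] by simp
  then show ?thesis using i by (simp add: bij_betw_def)
qed

theorem theorem3p1:
  fixes n :: nat
  assumes "n \<ge> 1"
  shows "\<exists>\<Phi>. bij_betw \<Phi> (perms n) (perms n) \<and>
          (\<forall>\<sigma> \<in> perms n.
             (ndes n \<sigma>, fmax n \<sigma>, pat31_2 n \<sigma>, pat2_31 n \<sigma>, MAD n \<sigma>) =
             (wex n (\<Phi> \<sigma>), fixcount n (\<Phi> \<sigma>), cros n (\<Phi> \<sigma>), nest n (\<Phi> \<sigma>), invc n (\<Phi> \<sigma>)))"
proof -
  have b1: "bij_betw (shist n) (perms n) (HS n 0)"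
    by (rule bij_hist) (auto simp: perms_def intro: shist_inj shist_HS)
  have b2: "bij_betw (thist n) (perms n) (HS n 0)"
    by (rule bij_hist) (auto simp: perms_def intro: thist_inj thist_HS)
  define \<Phi> where "\<Phi> = the_inv_into (perms n) (thist n) \<circ> shist n"
  have bij: "bij_betw \<Phi> (perms n) (perms n)"
    unfolding \<Phi>_def by (rule bij_betw_trans[OF b1 bij_betw_the_inv_into[OF b2]])
  have st: "(ndes n \<sigma>, fmax n \<sigma>, pat31_2 n \<sigma>, pat2_31 n \<sigma>, MAD n \<sigma>) =
             (wex n (\<Phi> \<sigma>), fixcount n (\<Phi> \<sigma>), cros n (\<Phi> \<sigma>), nest n (\<Phi> \<sigma>), invc n (\<Phi> \<sigma>))"
    if s: "\<sigma> \<in> perms n" for \<sigma>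
  proof -
    have sh: "shist n \<sigma> \<in> HS n 0" using b1 s by (auto simp: bij_betw_def)
    have "\<Phi> \<sigma> \<in> perms n" using bij s by (auto simp: bij_betw_def)
    then have tp: "\<Phi> \<sigma> permutes {1..n}" by (simp add: perms_def)
    have "thist n (\<Phi> \<sigma>) = shist n \<sigma>"
      unfolding \<Phi>_def using f_the_inv_into_f_bij_betw[OF b2 sh] by simp
    then have "HT (thist n (\<Phi> \<sigma>)) = HT (shist n \<sigma>)" by simp
    then show ?thesis using shist_HT[of \<sigma> n] thist_HT[OF tp] s by (simp add: perms_def)
  qed
  show ?thesis using bij st by blast
qed


end
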